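(* Let $n,m\ge 1$ and let $T$ be a geometric tree covering $V(n,m)=\{1,\dots,n\}\times\{1,\dots,m\}$. Then: (i) $T$ has at least $2\min(n,m)-2$ edges; (ii) if $n,m\le 2$, $T$ has at least $2\min(n,m)-1$ edges; (iii) if $n\ne m$, $T$ has at least $2\min(n,m)-1$ edges; (iv) if $n=m\ge 3$ and $T$ is noncrossing, $T$ has at least $2n-1$ edges.
   Context: A geometric tree is a finite abstract tree with at least one edge whose vertices are distinct points of the plane (arbitrary, not necessarily grid points) and whose edges are drawn as closed straight-line segments between their endpoints. It covers $P$ if every point of $P$ lies on the union of its edges. It is noncrossing if any two edges intersect only if they share an endpoint, and then only in that endpoint. *)

theory Defs
  imports "HOL-Analysis.Analysis"
begin

type_synonym point = "real \<times> real"

definition adj :: "'a set set \<Rightarrow> 'a \<Rightarrow> 'a \<Rightarrow> bool" where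
  "adj E u v \<longleftrightarrow> {u, v} \<in> E"

definition graph_connected :: "'a set \<Rightarrow> 'a set set \<Rightarrow> bool" where
  "graph_connected V E \<longleftrightarrow> (\<forall>u\<in>V. \<forall>v\<in>V. (u, v) \<in> {(x, y). adj E x y}\<^sup>*)"

text \<open>Acyclic: no edge lies on a cycle, i.e. removing any edge disconnects its endpoints.\<close>
definition graph_acyclic :: "'a set set \<Rightarrow> bool" where
  "graph_acyclic E \<longleftrightarrow> (\<forall>u v. {u, v} \<in> E \<longrightarrow> (u, v) \<notin> {(x, y). adj (E - {{u, v}}) x y}\<^sup>*)"

definition is_tree :: "'a set \<Rightarrow> 'a set set \<Rightarrow> bool" where
  "is_tree V E \<longleftrightarrow> finite V \<and> (\<forall>e\<in>E. \<exists>u v. u \<in> V \<and> v \<in> V \<and> u \<noteq> v \<and> e = {u, v})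
     \<and> graph_connected V E \<and> graph_acyclic E"

text \<open>A geometric tree: a finite tree with at least one edge whose vertices are distinct points
  of the plane (vertices are the points themselves); edges are drawn as closed segments.\<close>
definition geometric_tree :: "point set \<Rightarrow> point set set \<Rightarrow> bool" where
  "geometric_tree V E \<longleftrightarrow> is_tree V E \<and> E \<noteq> {}"

definition edge_seg :: "point set \<Rightarrow> point set" where
  "edge_seg e = (THE s. \<exists>u v. e = {u, v} \<and> s = closed_segment u v)"

definition covers :: "point set set \<Rightarrow> point set \<Rightarrow> bool" where
  "covers E P \<longleftrightarrow> P \<subseteq> (\<Union>e\<in>E. edge_seg e)"

definition noncrossing :: "point set set \<Rightarrow> bool" where
  "noncrossing E \<longleftrightarrow> (\<forall>e\<in>E. \<forall>f\<in>E. e \<noteq> f \<longrightarrow> edge_seg e \<inter> edge_seg f = e \<inter> f)"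

definition grid :: "nat \<Rightarrow> nat \<Rightarrow> point set" where
  "grid n m = {(real i, real j) | i j. i \<in> {1..n} \<and> j \<in> {1..m}}"

end

theory Submission
  imports Defs
begin

lemma edge_seg_pair: "edge_seg {u, v} = closed_segment u v"
  unfolding edge_seg_def
proof (rule the_equality)
  show "\<exists>u' v'. {u, v} = {u', v'} \<and> closed_segment u v = closed_segment u' v'" by blast
next
  fix s assume "\<exists>u' v'. {u, v} = {u', v'} \<and> s = closed_segment u' v'"
  then obtain u' v' where "{u, v} = {u', v'}" "s = closed_segment u' v'" by blast
  then show "s = closed_segment u v"
    by (metis closed_segment_commute doubleton_eq_iff)
qed

lemma seg_param: "p \<in> closed_segment u v \<Longrightarrow> \<exists>t. 0 \<le> t \<and> t \<le> 1 \<and> p = (1 - t) *\<^sub>R u + t *\<^sub>R v"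
  by (auto simp: closed_segment_def)

lemma pt_eq: "(p::point) = q \<longleftrightarrow> fst p = fst q \<and> snd p = snd q"
  by (simp add: prod_eq_iff)

lemma seg_fst_const:
  fixes u v a c :: point
  assumes "a \<in> closed_segment u v" "c \<in> closed_segment u v" "a \<noteq> c" "fst a = x0" "fst c = x0"
  shows "closed_segment u v \<subseteq> {p. fst p = x0}"
proof -
  obtain s where s: "0 \<le> s" "s \<le> 1" "a = (1 - s) *\<^sub>R u + s *\<^sub>R v" using seg_param assms(1) by blast
  obtain t where t: "0 \<le> t" "t \<le> 1" "c = (1 - t) *\<^sub>R u + t *\<^sub>R v" using seg_param assms(2) by blast
  have "s \<noteq> t" using s t assms(3) by auto
  have e1: "(1 - s) * fst u + s * fst v = x0" using s assms(4) by simp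
  have e2: "(1 - t) * fst u + t * fst v = x0" using t assms(5) by simp
  have "(s - t) * (fst v - fst u) = 0" using e1 e2 by (simp add: algebra_simps)
  then have "fst v = fst u" using \<open>s \<noteq> t\<close> by simp
  then have "fst u = x0" using e1 by (simp add: algebra_simps)
  show ?thesis
  proof
    fix p assume "p \<in> closed_segment u v"
    then obtain r where "p = (1 - r) *\<^sub>R u + r *\<^sub>R v" using seg_param by blast
    then have "fst p = (1 - r) * fst u + r * fst v" by simp
    then show "p \<in> {p. fst p = x0}" using \<open>fst v = fst u\<close> \<open>fst u = x0\<close> by (simp add: algebra_simps)
  qed
qed

lemma seg_snd_const:
  fixes u v a c :: point
  assumes "a \<in> closed_segment u v" "c \<in> closed_segment u v" "a \<noteq> c" "snd a = x0" "snd c = x0"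
  shows "closed_segment u v \<subseteq> {p. snd p = x0}"
proof -
  obtain s where s: "0 \<le> s" "s \<le> 1" "a = (1 - s) *\<^sub>R u + s *\<^sub>R v" using seg_param assms(1) by blast
  obtain t where t: "0 \<le> t" "t \<le> 1" "c = (1 - t) *\<^sub>R u + t *\<^sub>R v" using seg_param assms(2) by blast
  have "s \<noteq> t" using s t assms(3) by auto
  have e1: "(1 - s) * snd u + s * snd v = x0" using s assms(4) by simp
  have e2: "(1 - t) * snd u + t * snd v = x0" using t assms(5) by simp
  have "(s - t) * (snd v - snd u) = 0" using e1 e2 by (simp add: algebra_simps)
  then have "snd v = snd u" using \<open>s \<noteq> t\<close> by simp
  then have "snd u = x0" using e1 by (simp add: algebra_simps)
  show ?thesis
  proof
    fix p assume "p \<in> closed_segment u v"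
    then obtain r where "p = (1 - r) *\<^sub>R u + r *\<^sub>R v" using seg_param by blast
    then have "snd p = (1 - r) * snd u + r * snd v" by simp
    then show "p \<in> {p. snd p = x0}" using \<open>snd v = snd u\<close> \<open>snd u = x0\<close> by (simp add: algebra_simps)
  qed
qed

definition orient :: "point \<Rightarrow> point \<Rightarrow> point \<Rightarrow> real" where
  "orient a c p = (fst c - fst a) * (snd p - snd a) - (snd c - snd a) * (fst p - fst a)"

lemma orient_affine: "orient a c ((1 - t) *\<^sub>R x + t *\<^sub>R z) = (1 - t) * orient a c x + t * orient a c z"
  unfolding orient_def by (simp add: algebra_simps)

lemma orient_swap: "orient c a p = - orient a c p"
  unfolding orient_def by (simp add: algebra_simps)

lemma orient_self1[simp]: "orient a c a = 0" and orient_self2[simp]: "orient a c c = 0"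
  unfolding orient_def by (simp_all add: algebra_simps)

lemma orient_seg: "p \<in> closed_segment a c \<Longrightarrow> orient a c p = 0"
  by (metis orient_affine orient_self1 orient_self2 seg_param mult_zero_right add_0)

lemma endpoint_not_inner:
  fixes u v a c X :: point
  assumes "a \<in> closed_segment u v" "c \<in> closed_segment u v" "X \<in> closed_segment a c" "X \<noteq> a" "X \<noteq> c"
  shows "X \<noteq> u"
proof
  assume XU: "X = u"
  obtain s where s: "0 \<le> s" "s \<le> 1" "a = (1 - s) *\<^sub>R u + s *\<^sub>R v" using seg_param assms(1) by blast
  obtain t where t: "0 \<le> t" "t \<le> 1" "c = (1 - t) *\<^sub>R u + t *\<^sub>R v" using seg_param assms(2) by blast
  obtain l where l: "0 \<le> l" "l \<le> 1" "X = (1 - l) *\<^sub>R a + l *\<^sub>R c" using seg_param assms(3) by blast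
  define k where "k = (1 - l) * s + l * t"
  have a1: "fst a = (1 - s) * fst u + s * fst v" "snd a = (1 - s) * snd u + s * snd v" using s by simp_all
  have c1: "fst c = (1 - t) * fst u + t * fst v" "snd c = (1 - t) * snd u + t * snd v" using t by simp_all
  have x1: "fst X = (1 - l) * fst a + l * fst c" "snd X = (1 - l) * snd a + l * snd c" using l by simp_all
  have fx: "fst X = fst u + k * (fst v - fst u)"
    unfolding x1 a1 c1 k_def by (simp add: algebra_simps)
  have sx: "snd X = snd u + k * (snd v - snd u)"
    unfolding x1 a1 c1 k_def by (simp add: algebra_simps)
  have "v \<noteq> u"
  proof
    assume "v = u" then have "a = u" "c = u" using s t by (simp_all flip: scaleR_add_left)
    then show False using assms(4) XU by simp
  qed
  then have "fst v \<noteq> fst u \<or> snd v \<noteq> snd u" by (simp add: prod_eq_iff)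
  then have z: "(1 - l) * s + l * t = 0" using fx sx XU unfolding k_def by auto
  have "l \<noteq> 0" using l assms(4) by auto
  have "l \<noteq> 1" using l assms(5) by auto
  have "(1 - l) * s \<ge> 0" "l * t \<ge> 0" using l s t by auto
  then have "(1-l) * s = 0" "l * t = 0" using z by linarith+
  then have "s = 0" "t = 0" using \<open>l \<noteq> 0\<close> \<open>l \<noteq> 1\<close> by auto
  then have "a = u" using s by simp
  then show False using assms(4) XU by simp
qed

lemma endpoint_not_inner2:
  fixes u v a c X :: point
  assumes "a \<in> closed_segment u v" "c \<in> closed_segment u v" "X \<in> closed_segment a c" "X \<noteq> a" "X \<noteq> c"
  shows "X \<noteq> v"
  using endpoint_not_inner[of a v u c X] assms by (simp add: closed_segment_commute)

definition between3 :: "point \<Rightarrow> point \<Rightarrow> point \<Rightarrow> bool" where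
  "between3 p q r \<longleftrightarrow> (\<exists>\<mu>. 0 < \<mu> \<and> \<mu> < 1 \<and> q = (1 - \<mu>) *\<^sub>R p + \<mu> *\<^sub>R r)"

lemma between_aux:
  fixes u v :: point
  assumes "p = (1 - sp) *\<^sub>R u + sp *\<^sub>R v" "q = (1 - sq) *\<^sub>R u + sq *\<^sub>R v" "r = (1 - sr) *\<^sub>R u + sr *\<^sub>R v"
    and "(sp < sq \<and> sq < sr) \<or> (sr < sq \<and> sq < sp)"
  shows "between3 p q r"
proof -
  define \<mu> where "\<mu> = (sq - sp) / (sr - sp)"
  have ne: "sr - sp \<noteq> 0" using assms(4) by auto
  have m1: "0 < \<mu>" "\<mu> < 1" using assms(4) unfolding \<mu>_def by (auto simp: field_simps)
  have k0: "\<mu> * (sr - sp) = sq - sp" unfolding \<mu>_def using ne by simp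
  have key: "(1 - \<mu>) * sp + \<mu> * sr = sq" using k0 by (simp add: algebra_simps)
  have "fst q = (1 - \<mu>) * fst p + \<mu> * fst r"
  proof -
    have q1: "fst q = (1 - sq) * fst u + sq * fst v" using assms(2) by simp
    have p1: "fst p = (1 - sp) * fst u + sp * fst v" using assms(1) by simp
    have r1: "fst r = (1 - sr) * fst u + sr * fst v" using assms(3) by simp
    have "fst q = fst u + sq * (fst v - fst u)" unfolding q1 by (simp add: algebra_simps)
    moreover have "(1 - \<mu>) * fst p + \<mu> * fst r = fst u + ((1 - \<mu>) * sp + \<mu> * sr) * (fst v - fst u)"
      unfolding p1 r1 by (simp add: algebra_simps)
    ultimately show ?thesis using key by simp
  qed
  moreover have "snd q = (1 - \<mu>) * snd p + \<mu> * snd r"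
  proof -
    have q1: "snd q = (1 - sq) * snd u + sq * snd v" using assms(2) by simp
    have p1: "snd p = (1 - sp) * snd u + sp * snd v" using assms(1) by simp
    have r1: "snd r = (1 - sr) * snd u + sr * snd v" using assms(3) by simp
    have "snd q = snd u + sq * (snd v - snd u)" unfolding q1 by (simp add: algebra_simps)
    moreover have "(1 - \<mu>) * snd p + \<mu> * snd r = snd u + ((1 - \<mu>) * sp + \<mu> * sr) * (snd v - snd u)"
      unfolding p1 r1 by (simp add: algebra_simps)
    ultimately show ?thesis using key by simp
  qed
  ultimately have "q = (1 - \<mu>) *\<^sub>R p + \<mu> *\<^sub>R r" by (simp add: prod_eq_iff)
  then show ?thesis unfolding between3_def using m1 by blast
qed

lemma three_in_seg:
  fixes u v p q r :: point
  assumes "p \<in> closed_segment u v" "q \<in> closed_segment u v" "r \<in> closed_segment u v"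
    and "p \<noteq> q" "q \<noteq> r" "p \<noteq> r"
  shows "between3 p q r \<or> between3 q p r \<or> between3 p r q"
proof -
  obtain sp where sp: "p = (1 - sp) *\<^sub>R u + sp *\<^sub>R v" using seg_param assms(1) by blast
  obtain sq where sq: "q = (1 - sq) *\<^sub>R u + sq *\<^sub>R v" using seg_param assms(2) by blast
  obtain sr where sr: "r = (1 - sr) *\<^sub>R u + sr *\<^sub>R v" using seg_param assms(3) by blast
  have "sp \<noteq> sq" "sq \<noteq> sr" "sp \<noteq> sr" using sp sq sr assms(4-6) by auto
  then consider "(sp < sq \<and> sq < sr) \<or> (sr < sq \<and> sq < sp)"
    | "(sq < sp \<and> sp < sr) \<or> (sr < sp \<and> sp < sq)"
    | "(sp < sr \<and> sr < sq) \<or> (sq < sr \<and> sr < sp)" by linarith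
  then show ?thesis
  proof cases
    case 1 then show ?thesis using between_aux[OF sp sq sr] by blast
  next
    case 2 then show ?thesis using between_aux[OF sq sp sr] by blast
  next
    case 3 then show ?thesis using between_aux[OF sp sr sq] by blast
  qed
qed

definition inQ :: "real \<Rightarrow> real \<Rightarrow> real \<Rightarrow> real \<Rightarrow> point \<Rightarrow> bool" where
  "inQ x1 x2 y1 y2 p \<longleftrightarrow> x1 \<le> fst p \<and> fst p \<le> x2 \<and> y1 \<le> snd p \<and> snd p \<le> y2"

definition sidef :: "real \<Rightarrow> real \<Rightarrow> real \<Rightarrow> real \<Rightarrow> point \<Rightarrow> nat \<Rightarrow> bool" where
  "sidef x1 x2 y1 y2 p k \<longleftrightarrow> (if k = 0 then fst p = x1 else if k = 1 then fst p = x2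
     else if k = 2 then snd p = y1 else snd p = y2)"

definition onbdf :: "real \<Rightarrow> real \<Rightarrow> real \<Rightarrow> real \<Rightarrow> point \<Rightarrow> bool" where
  "onbdf x1 x2 y1 y2 p \<longleftrightarrow> inQ x1 x2 y1 y2 p \<and> (\<exists>k<4. sidef x1 x2 y1 y2 p k)"

locale box0 =
  fixes E :: "point set set" and x1 x2 y1 y2 :: real
  assumes edges: "\<forall>e\<in>E. \<exists>u v. u \<noteq> v \<and> e = {u, v}"
    and free: "\<forall>e\<in>E. \<forall>k<4. \<not> edge_seg e \<subseteq> {p. sidef x1 x2 y1 y2 p k}"
begin

abbreviation "Q \<equiv> inQ x1 x2 y1 y2"
abbreviation "side \<equiv> sidef x1 x2 y1 y2"
abbreviation "onbd \<equiv> onbdf x1 x2 y1 y2"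
definition "same_side a c \<longleftrightarrow> (\<exists>k<4. side a k \<and> side c k)"

lemma mid:
  assumes "Q x" "Q z" "0 < t" "t < 1" "k < 4" "side ((1 - t) *\<^sub>R x + t *\<^sub>R z) k"
  shows "side x k \<and> side z k"
proof -
  have t1: "0 < 1 - t" using assms by simp
  have "k = 0 \<or> k = 1 \<or> k = 2 \<or> k = 3" using assms(5) by auto
  then show ?thesis
  proof (elim disjE)
    assume k: "k = 0"
    have "(1 - t) * fst x + t * fst z = x1" using assms(6) k by (simp add: sidef_def)
    moreover have "fst x \<ge> x1" "fst z \<ge> x1" using assms(1,2) by (auto simp: inQ_def)
    ultimately have "(1 - t) * (fst x - x1) + t * (fst z - x1) = 0" by (simp add: algebra_simps)
    moreover have "(1 - t) * (fst x - x1) \<ge> 0" "t * (fst z - x1) \<ge> 0" using t1 assms(3) \<open>fst x \<ge> x1\<close> \<open>fst z \<ge> x1\<close> by auto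
    ultimately have "(1 - t) * (fst x - x1) = 0" "t * (fst z - x1) = 0" by linarith+
    then show ?thesis using t1 assms(3) k by (simp add: sidef_def)
  next
    assume k: "k = 1"
    have "(1 - t) * fst x + t * fst z = x2" using assms(6) k by (simp add: sidef_def)
    moreover have "fst x \<le> x2" "fst z \<le> x2" using assms(1,2) by (auto simp: inQ_def)
    ultimately have "(1 - t) * (x2 - fst x) + t * (x2 - fst z) = 0" by (simp add: algebra_simps)
    moreover have "(1 - t) * (x2 - fst x) \<ge> 0" "t * (x2 - fst z) \<ge> 0" using t1 assms(3) \<open>fst x \<le> x2\<close> \<open>fst z \<le> x2\<close> by auto
    ultimately have "(1 - t) * (x2 - fst x) = 0" "t * (x2 - fst z) = 0" by linarith+
    then show ?thesis using t1 assms(3) k by (simp add: sidef_def)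
  next
    assume k: "k = 2"
    have "(1 - t) * snd x + t * snd z = y1" using assms(6) k by (simp add: sidef_def)
    moreover have "snd x \<ge> y1" "snd z \<ge> y1" using assms(1,2) by (auto simp: inQ_def)
    ultimately have "(1 - t) * (snd x - y1) + t * (snd z - y1) = 0" by (simp add: algebra_simps)
    moreover have "(1 - t) * (snd x - y1) \<ge> 0" "t * (snd z - y1) \<ge> 0" using t1 assms(3) \<open>snd x \<ge> y1\<close> \<open>snd z \<ge> y1\<close> by auto
    ultimately have "(1 - t) * (snd x - y1) = 0" "t * (snd z - y1) = 0" by linarith+
    then show ?thesis using t1 assms(3) k by (simp add: sidef_def)
  next
    assume k: "k = 3"
    have "(1 - t) * snd x + t * snd z = y2" using assms(6) k by (simp add: sidef_def)
    moreover have "snd x \<le> y2" "snd z \<le> y2" using assms(1,2) by (auto simp: inQ_def)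
    ultimately have "(1 - t) * (y2 - snd x) + t * (y2 - snd z) = 0" by (simp add: algebra_simps)
    moreover have "(1 - t) * (y2 - snd x) \<ge> 0" "t * (y2 - snd z) \<ge> 0" using t1 assms(3) \<open>snd x \<le> y2\<close> \<open>snd z \<le> y2\<close> by auto
    ultimately have "(1 - t) * (y2 - snd x) = 0" "t * (y2 - snd z) = 0" by linarith+
    then show ?thesis using t1 assms(3) k by (simp add: sidef_def)
  qed
qed

lemma Q_convex:
  assumes "Q x" "Q z" "0 \<le> t" "t \<le> 1"
  shows "Q ((1 - t) *\<^sub>R x + t *\<^sub>R z)"
proof -
  have t1: "0 \<le> 1 - t" using assms by simp
  have h: "\<And>a b lo hi::real. lo \<le> a \<Longrightarrow> a \<le> hi \<Longrightarrow> lo \<le> b \<Longrightarrow> b \<le> hi \<Longrightarrow> lo \<le> (1 - t) * a + t * b \<and> (1 - t) * a + t * b \<le> hi"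
  proof -
    fix a b lo hi :: real assume "lo \<le> a" "a \<le> hi" "lo \<le> b" "b \<le> hi"
    then have "(1 - t) * lo \<le> (1 - t) * a" "t * lo \<le> t * b" "(1 - t) * a \<le> (1 - t) * hi" "t * b \<le> t * hi"
      using t1 assms(3) by (auto intro: mult_left_mono)
    then show "lo \<le> (1 - t) * a + t * b \<and> (1 - t) * a + t * b \<le> hi" by (simp add: algebra_simps)
  qed
  show ?thesis using assms(1,2) h[of x1 "fst x" x2 "fst z"] h[of y1 "snd x" y2 "snd z"] by (simp add: inQ_def)
qed

lemma seg_Q: "Q a \<Longrightarrow> Q c \<Longrightarrow> X \<in> closed_segment a c \<Longrightarrow> Q X"
  using Q_convex seg_param by blast

lemma seg_side:
  fixes a c u v :: point
  assumes "a \<in> closed_segment u v" "c \<in> closed_segment u v" "a \<noteq> c" "k < 4" "side a k" "side c k"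
  shows "closed_segment u v \<subseteq> {p. side p k}"
proof -
  have "k = 0 \<or> k = 1 \<or> k = 2 \<or> k = 3" using assms(4) by auto
  then show ?thesis
  proof (elim disjE)
    assume "k = 0" then show ?thesis using seg_fst_const[OF assms(1-3), of x1] assms(5,6) by (simp add: sidef_def)
  next
    assume "k = 1" then show ?thesis using seg_fst_const[OF assms(1-3), of x2] assms(5,6) by (simp add: sidef_def)
  next
    assume "k = 2" then show ?thesis using seg_snd_const[OF assms(1-3), of y1] assms(5,6) by (simp add: sidef_def)
  next
    assume "k = 3" then show ?thesis using seg_snd_const[OF assms(1-3), of y2] assms(5,6) by (simp add: sidef_def)
  qed
qed

lemma seg_e: "e \<in> E \<Longrightarrow> \<exists>u v. u \<noteq> v \<and> e = {u, v} \<and> edge_seg e = closed_segment u v"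
proof -
  assume "e \<in> E"
  then obtain u v where "u \<noteq> v" "e = {u, v}" using edges by blast
  then show ?thesis by (intro exI[of _ u] exI[of _ v]) (simp add: edge_seg_pair)
qed

lemma no_two_on_side:
  assumes "e \<in> E" "a \<in> edge_seg e" "c \<in> edge_seg e" "a \<noteq> c" "k < 4" "side a k" "side c k"
  shows False
proof -
  obtain u v where uv: "u \<noteq> v" "e = {u, v}" "edge_seg e = closed_segment u v" using seg_e assms(1) by blast
  have "edge_seg e \<subseteq> {p. side p k}" using seg_side[of a u v c k] assms uv by simp
  then show False using free assms(1,5) by blast
qed

lemma not_same_side:
  assumes "e \<in> E" "a \<in> edge_seg e" "c \<in> edge_seg e" "a \<noteq> c"
  shows "\<not> same_side a c"
  using no_two_on_side[OF assms] unfolding same_side_def by blast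

lemma three:
  assumes "e \<in> E" "p \<in> edge_seg e" "q \<in> edge_seg e" "r \<in> edge_seg e"
    and "p \<noteq> q" "q \<noteq> r" "p \<noteq> r" "onbd p" "onbd q" "onbd r"
  shows False
proof -
  obtain u v where uv: "u \<noteq> v" "e = {u, v}" "edge_seg e = closed_segment u v" using seg_e assms(1) by blast
  have gen: "\<And>x y z. x \<in> edge_seg e \<Longrightarrow> z \<in> edge_seg e \<Longrightarrow> x \<noteq> z \<Longrightarrow> onbd x \<Longrightarrow> onbd y \<Longrightarrow> onbd z \<Longrightarrow> between3 x y z \<Longrightarrow> False"
  proof -
    fix x y z assume h: "x \<in> edge_seg e" "z \<in> edge_seg e" "x \<noteq> z" "onbd x" "onbd y" "onbd z" "between3 x y z"
    obtain \<mu> where mu: "0 < \<mu>" "\<mu> < 1" "y = (1 - \<mu>) *\<^sub>R x + \<mu> *\<^sub>R z" using h(7) unfolding between3_def by blast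
    obtain k where k: "k < 4" "side y k" using h(5) unfolding onbdf_def by blast
    have "side x k \<and> side z k" using mid[of x z \<mu> k] h(4,6) mu k unfolding onbdf_def by simp
    then show False using no_two_on_side[OF assms(1) h(1,2,3) k(1)] by blast
  qed
  have "between3 p q r \<or> between3 q p r \<or> between3 p r q"
    using three_in_seg[of p u v q r] assms uv by simp
  then show False
  proof (elim disjE)
    assume "between3 p q r" then show False using gen[of p r q] assms by blast
  next
    assume "between3 q p r" then show False using gen[of q r p] assms by blast
  next
    assume "between3 p r q" then show False using gen[of p q r] assms by blast
  qed
qed

end


lemma collinear_param:
  fixes b d Y :: point
  assumes "b \<noteq> d" "orient b d Y = 0"
  shows "\<exists>l. Y = (1 - l) *\<^sub>R b + l *\<^sub>R d"
proof -
  define dx where "dx = fst d - fst b"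
  define dy where "dy = snd d - snd b"
  define wx where "wx = fst Y - fst b"
  define wy where "wy = snd Y - snd b"
  have D: "dx * dx + dy * dy > 0"
  proof -
    have "dx \<noteq> 0 \<or> dy \<noteq> 0" using assms(1) unfolding dx_def dy_def by (auto simp: prod_eq_iff)
    then show ?thesis by (metis add_pos_nonneg add_nonneg_pos zero_le_square not_real_square_gt_zero)
  qed
  have o: "dx * wy = dy * wx" using assms(2) unfolding orient_def dx_def dy_def wx_def wy_def by simp
  define l where "l = (wx * dx + wy * dy) / (dx * dx + dy * dy)"
  have lx: "l * dx = wx"
  proof -
    have eq: "(wx * dx + wy * dy) * dx = wx * (dx * dx + dy * dy)" using o by (simp add: algebra_simps)
    have "l * dx = ((wx * dx + wy * dy) * dx) / (dx * dx + dy * dy)" unfolding l_def by simp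
    also have "\<dots> = wx" using D eq by (metis nonzero_mult_div_cancel_right less_irrefl)
    finally show ?thesis .
  qed
  have ly: "l * dy = wy"
  proof -
    have eq: "(wx * dx + wy * dy) * dy = wy * (dx * dx + dy * dy)" using o by (simp add: algebra_simps)
    have "l * dy = ((wx * dx + wy * dy) * dy) / (dx * dx + dy * dy)" unfolding l_def by simp
    also have "\<dots> = wy" using D eq by (metis nonzero_mult_div_cancel_right less_irrefl)
    finally show ?thesis .
  qed
  have "fst Y = (1 - l) * fst b + l * fst d" using lx unfolding dx_def wx_def by (simp add: algebra_simps)
  moreover have "snd Y = (1 - l) * snd b + l * snd d" using ly unfolding dy_def wy_def by (simp add: algebra_simps)
  ultimately show ?thesis by (auto simp: prod_eq_iff)
qed

lemma seg_mem: "0 \<le> t \<Longrightarrow> t \<le> 1 \<Longrightarrow> (1 - t) *\<^sub>R b + t *\<^sub>R d \<in> closed_segment b d"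
  by (auto simp: closed_segment_def)

lemma seg_sub_seg: "a \<in> closed_segment u v \<Longrightarrow> c \<in> closed_segment u v \<Longrightarrow> closed_segment a c \<subseteq> closed_segment u v"
  by (simp add: closed_segment_subset convex_closed_segment)

context box0
begin

lemma line_seg:
  assumes "onbd b" "onbd d" "b \<noteq> d" "\<not> same_side b d" "Q Y" "orient b d Y = 0"
  shows "Y \<in> closed_segment b d"
proof -
  obtain l where l: "Y = (1 - l) *\<^sub>R b + l *\<^sub>R d" using collinear_param assms(3,6) by blast
  have Qb: "Q b" and Qd: "Q d" using assms(1,2) unfolding onbdf_def by auto
  consider "0 \<le> l \<and> l \<le> 1" | "l > 1" | "l < 0" by linarith
  then show ?thesis
  proof cases
    case 1 then show ?thesis using l seg_mem by blast
  next
    case 2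
    define m where "m = 1 / l"
    have m: "0 < m" "m < 1" using 2 unfolding m_def by auto
    have "d = (1 - m) *\<^sub>R b + m *\<^sub>R Y"
      using 2 unfolding l m_def by (auto simp: prod_eq_iff field_simps)
    moreover obtain k where k: "k < 4" "side d k" using assms(2) unfolding onbdf_def by blast
    ultimately have "side b k" using mid[OF Qb assms(5) m k(1)] by simp
    then show ?thesis using assms(4) k unfolding same_side_def by blast
  next
    case 3
    define m where "m = - l / (1 - l)"
    have m: "0 < m" "m < 1" using 3 unfolding m_def by (auto simp: field_simps)
    have l1: "1 - l > 0" using 3 by simp
    have yx: "fst Y = (1 - l) * fst b + l * fst d" "snd Y = (1 - l) * snd b + l * snd d" using l by simp_all
    have mm1: "(1 - m) * (1 - l) = 1" unfolding m_def using l1 by (simp add: field_simps)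
    have mm2: "(1 - m) * l + m = 0" unfolding m_def using l1 by (simp add: field_simps)
    have gen: "\<And>x y::real. (1 - m) * ((1 - l) * x + l * y) + m * y = ((1 - m) * (1 - l)) * x + ((1 - m) * l + m) * y"
      by (simp add: algebra_simps)
    have "fst b = (1 - m) * fst Y + m * fst d" unfolding yx gen mm1 mm2 by simp
    moreover have "snd b = (1 - m) * snd Y + m * snd d" unfolding yx gen mm1 mm2 by simp
    ultimately have "b = (1 - m) *\<^sub>R Y + m *\<^sub>R d" by (simp add: prod_eq_iff)
    moreover obtain k where k: "k < 4" "side b k" using assms(1) unfolding onbdf_def by blast
    ultimately have "side d k" using mid[OF assms(5) Qd m k(1)] by simp
    then show ?thesis using assms(4) k unfolding same_side_def by blast
  qed
qed

end

locale ear = box0 +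
  fixes B :: "point set"
  assumes finB: "finite B"
    and B_bd: "\<forall>p\<in>B. onbd p"
    and corners: "(x1, y1) \<in> B" "(x1, y2) \<in> B" "(x2, y1) \<in> B" "(x2, y2) \<in> B"
    and lt: "x1 < x2" "y1 < y2"
    and cov: "\<forall>p\<in>B. \<exists>e\<in>E. p \<in> edge_seg e"
    and two: "\<forall>e\<in>E. \<forall>p\<in>B. p \<in> edge_seg e \<longrightarrow> (\<exists>q\<in>B. q \<noteq> p \<and> q \<in> edge_seg e)"
    and disj: "\<forall>e1\<in>E. \<forall>e2\<in>E. e1 \<noteq> e2 \<longrightarrow> edge_seg e1 \<inter> edge_seg e2 \<inter> B = {}"
begin

lemma B_Q: "p \<in> B \<Longrightarrow> Q p" using B_bd unfolding onbdf_def by blast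

lemma three_B:
  assumes "e \<in> E" "p \<in> edge_seg e" "q \<in> edge_seg e" "r \<in> edge_seg e"
    and "p \<noteq> q" "q \<noteq> r" "p \<noteq> r" "p \<in> B" "q \<in> B" "r \<in> B"
  shows False
  using three[OF assms(1-7)] B_bd assms(8-10) by blast

lemma cross:
  assumes nc: "noncrossing E"
    and e1: "e1 \<in> E" "a \<in> edge_seg e1" "c \<in> edge_seg e1" "a \<in> B" "c \<in> B" "a \<noteq> c"
    and e2: "e2 \<in> E" "b \<in> edge_seg e2" "d \<in> edge_seg e2" "b \<in> B" "d \<in> B" "b \<noteq> d"
    and sg: "orient a c b > 0" "orient a c d < 0"
  shows False
proof -
  define fb where "fb = orient a c b"
  define fd where "fd = orient a c d"
  define t where "t = fb / (fb - fd)"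
  have fbd: "fb > 0" "fd < 0" using sg unfolding fb_def fd_def by auto
  have t: "0 < t" "t < 1" using fbd unfolding t_def by (auto simp: field_simps)
  define X where "X = (1 - t) *\<^sub>R b + t *\<^sub>R d"
  have "orient a c X = (1 - t) * fb + t * fd" unfolding X_def fb_def fd_def by (rule orient_affine)
  also have "\<dots> = fb - t * (fb - fd)" by (simp add: algebra_simps)
  also have "\<dots> = 0" unfolding t_def using fbd by simp
  finally have oX: "orient a c X = 0" .
  have QX: "Q X" unfolding X_def using Q_convex B_Q e2(4,5) t by simp
  have Xac: "X \<in> closed_segment a c"
    using line_seg[OF _ _ e1(6) not_same_side[OF e1(1-3,6)] QX oX] B_bd e1(4,5) by blast
  have Xbd: "X \<in> closed_segment b d" unfolding X_def using seg_mem[of t b d] t by simp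
  obtain u v where uv: "u \<noteq> v" "e1 = {u, v}" "edge_seg e1 = closed_segment u v" using seg_e e1(1) by blast
  obtain u2 v2 where uv2: "u2 \<noteq> v2" "e2 = {u2, v2}" "edge_seg e2 = closed_segment u2 v2" using seg_e e2(1) by blast
  have s1: "closed_segment a c \<subseteq> edge_seg e1" using seg_sub_seg e1(2,3) uv(3) by simp
  have s2: "closed_segment b d \<subseteq> edge_seg e2" using seg_sub_seg e2(2,3) uv2(3) by simp
  have ba: "b \<noteq> a" "b \<noteq> c" "d \<noteq> a" "d \<noteq> c" using fbd unfolding fb_def fd_def by auto
  have ne: "e1 \<noteq> e2"
  proof
    assume "e1 = e2"
    then show False using three_B[OF e1(1,2,3), of b] e1 e2 ba by auto
  qed
  have "X \<in> edge_seg e1 \<inter> edge_seg e2" using Xac Xbd s1 s2 by blast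
  then have "X \<in> e1" using nc ne e1(1) e2(1) unfolding noncrossing_def by blast
  then have Xuv: "X = u \<or> X = v" using uv(2) by blast
  have "X \<noteq> a"
  proof
    assume "X = a"
    then have "a \<in> edge_seg e2" using Xbd s2 by blast
    then show False using three_B[OF e2(1) _ e2(2,3), of a] e2 e1 ba by auto
  qed
  moreover have "X \<noteq> c"
  proof
    assume "X = c"
    then have "c \<in> edge_seg e2" using Xbd s2 by blast
    then show False using three_B[OF e2(1) _ e2(2,3), of c] e2 e1 ba by auto
  qed
  ultimately show False
    using endpoint_not_inner[of a u v c X] endpoint_not_inner2[of a u v c X] e1(2,3) uv(3) Xac Xuv by auto
qed

end


context ear
begin

definition "Pr a c \<longleftrightarrow> a \<in> B \<and> c \<in> B \<and> a \<noteq> c \<and> (\<exists>e\<in>E. a \<in> edge_seg e \<and> c \<in> edge_seg e)"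
definition "pos a c = {p \<in> B. 0 < orient a c p}"

lemma base:
  assumes "Pr a c" "\<forall>p\<in>B. orient a c p \<le> 0"
  shows False
proof -
  obtain e1 where e1: "e1 \<in> E" "a \<in> edge_seg e1" "c \<in> edge_seg e1" "a \<in> B" "c \<in> B" "a \<noteq> c"
    using assms(1) unfolding Pr_def by blast
  have ns: "\<not> same_side a c" using not_same_side[OF e1(1-3,6)] .
  define al where "al = - (snd c - snd a)"
  define be where "be = fst c - fst a"
  have diff: "\<And>p q. orient a c p - orient a c q = al * (fst p - fst q) + be * (snd p - snd q)"
    unfolding orient_def al_def be_def by (simp add: algebra_simps)
  define x0 where "x0 = (if al \<ge> 0 then x2 else x1)"
  define y0 where "y0 = (if be \<ge> 0 then y2 else y1)"
  have corner: "(x0, y0) \<in> B" unfolding x0_def y0_def using corners by auto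
  have allQ: "\<And>p. Q p \<Longrightarrow> orient a c p \<le> 0"
  proof -
    fix p assume "Q p"
    then have "x1 \<le> fst p" "fst p \<le> x2" "y1 \<le> snd p" "snd p \<le> y2" by (auto simp: inQ_def)
    then have "al * (fst p - x0) \<le> 0" "be * (snd p - y0) \<le> 0"
      unfolding x0_def y0_def by (auto simp: mult_le_0_iff)
    then have "orient a c p \<le> orient a c (x0, y0)" using diff[of p "(x0, y0)"] by simp
    also have "\<dots> \<le> 0" using assms(2) corner by blast
    finally show "orient a c p \<le> 0" .
  qed
  define M where "M = (1 - 1/2) *\<^sub>R a + (1/2) *\<^sub>R c"
  have QM: "Q M" unfolding M_def using Q_convex[of a c "1/2"] B_Q e1(4,5) by simp
  have oM: "orient a c M = 0" unfolding M_def orient_affine by simp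
  have nside: "\<And>k. k < 4 \<Longrightarrow> \<not> side M k"
  proof
    fix k assume k: "k < 4" "side M k"
    have "side a k \<and> side c k" using mid[of a c "1/2" k] B_Q e1(4,5) k unfolding M_def by simp
    then show False using ns k unfolding same_side_def by blast
  qed
  have strict: "x1 < fst M" "fst M < x2" "y1 < snd M" "snd M < y2"
    using QM nside[of 0] nside[of 1] nside[of 2] nside[of 3] by (auto simp: inQ_def sidef_def)
  define dl where "dl = min (min (fst M - x1) (x2 - fst M)) (min (snd M - y1) (y2 - snd M))"
  have dl: "dl > 0" "dl \<le> fst M - x1" "dl \<le> x2 - fst M" "dl \<le> snd M - y1" "dl \<le> y2 - snd M"
    using strict unfolding dl_def by auto
  define dx where "dx = fst c - fst a"
  define dy where "dy = snd c - snd a"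
  define N where "N = 1 + \<bar>dx\<bar> + \<bar>dy\<bar>"
  have N: "N > 0" unfolding N_def by simp
  define t where "t = dl / N"
  have t0: "t > 0" unfolding t_def using dl N by simp
  have tx: "t * \<bar>dx\<bar> \<le> dl" and ty: "t * \<bar>dy\<bar> \<le> dl"
  proof -
    have "t * N = dl" unfolding t_def using N by simp
    moreover have "t * \<bar>dx\<bar> \<le> t * N" "t * \<bar>dy\<bar> \<le> t * N" using t0 unfolding N_def
      by (auto intro!: mult_left_mono)
    ultimately show "t * \<bar>dx\<bar> \<le> dl" "t * \<bar>dy\<bar> \<le> dl" by auto
  qed
  define P where "P = (fst M - t * dy, snd M + t * dx)"
  have "\<bar>t * dy\<bar> \<le> dl" "\<bar>t * dx\<bar> \<le> dl" using tx ty t0 by (auto simp: abs_mult)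
  then have QP: "Q P" unfolding P_def inQ_def using dl by (auto simp: abs_le_iff)
  have "orient a c P = orient a c M + t * (dx * dx + dy * dy)"
    unfolding P_def orient_def dx_def dy_def by (simp add: algebra_simps)
  moreover have "dx * dx + dy * dy > 0"
  proof -
    have "dx \<noteq> 0 \<or> dy \<noteq> 0" using e1(6) unfolding dx_def dy_def by (auto simp: prod_eq_iff)
    then show ?thesis by (metis add_pos_nonneg add_nonneg_pos zero_le_square not_real_square_gt_zero)
  qed
  ultimately have "orient a c P > 0" using oM t0 by simp
  then show False using allQ[OF QP] by simp
qed

lemma shrink:
  assumes "Pr a c" "Pr b d" "orient a c b > 0" "orient a c d > 0" "orient b d a < 0" "orient b d c < 0"
  shows "pos b d \<subset> pos a c"
proof -
  obtain e2 where e2: "e2 \<in> E" "b \<in> edge_seg e2" "d \<in> edge_seg e2" "b \<in> B" "d \<in> B" "b \<noteq> d"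
    using assms(2) unfolding Pr_def by blast
  have aB: "a \<in> B" using assms(1) unfolding Pr_def by blast
  have ns: "\<not> same_side b d" using not_same_side[OF e2(1-3,6)] .
  have sub: "pos b d \<subseteq> pos a c"
  proof
    fix p assume "p \<in> pos b d"
    then have p: "p \<in> B" "orient b d p > 0" unfolding pos_def by auto
    show "p \<in> pos a c"
    proof (rule ccontr)
      assume "p \<notin> pos a c"
      then have fp: "orient a c p \<le> 0" using p unfolding pos_def by auto
      define ga where "ga = orient b d a"
      define gp where "gp = orient b d p"
      define t where "t = ga / (ga - gp)"
      have gg: "ga < 0" "gp > 0" using assms(5) p(2) unfolding ga_def gp_def by auto
      have t: "0 < t" "t < 1" using gg unfolding t_def by (auto simp: field_simps)
      define Y where "Y = (1 - t) *\<^sub>R a + t *\<^sub>R p"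
      have "orient b d Y = (1 - t) * ga + t * gp" unfolding Y_def ga_def gp_def by (rule orient_affine)
      also have "\<dots> = ga - t * (ga - gp)" by (simp add: algebra_simps)
      also have "\<dots> = 0" unfolding t_def using gg by simp
      finally have oY: "orient b d Y = 0" .
      have QY: "Q Y" unfolding Y_def using Q_convex B_Q aB p(1) t by simp
      have "Y \<in> closed_segment b d"
        using line_seg[OF _ _ e2(6) ns QY oY] B_bd e2(4,5) by blast
      then obtain s where s: "0 \<le> s" "s \<le> 1" "Y = (1 - s) *\<^sub>R b + s *\<^sub>R d" using seg_param by blast
      have "orient a c Y = (1 - s) * orient a c b + s * orient a c d" unfolding s(3) by (rule orient_affine)
      moreover have "(1 - s) * orient a c b + s * orient a c d > 0"
      proof (cases "s = 0")
        case True then show ?thesis using assms(3) by simp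
      next
        case False
        then have "s * orient a c d > 0" using s assms(4) by simp
        moreover have "(1 - s) * orient a c b \<ge> 0" using s assms(3) by simp
        ultimately show ?thesis by linarith
      qed
      moreover have "orient a c Y = (1 - t) * orient a c a + t * orient a c p" unfolding Y_def by (rule orient_affine)
      then have "orient a c Y \<le> 0" using t fp by (simp add: mult_nonneg_nonpos)
      ultimately show False by linarith
    qed
  qed
  moreover have "b \<in> pos a c" "b \<notin> pos b d" using assms(3) e2(4) unfolding pos_def by auto
  ultimately show ?thesis by blast
qed

lemma ear_false:
  assumes nc: "noncrossing E"
  shows False
proof -
  obtain e0 where e0: "e0 \<in> E" "(x1, y1) \<in> edge_seg e0" using cov corners by blast
  obtain q0 where q0: "q0 \<in> B" "q0 \<noteq> (x1, y1)" "q0 \<in> edge_seg e0" using two e0 corners by blast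
  have "Pr (x1, y1) q0" unfolding Pr_def using e0 q0 corners by blast
  then obtain ac where ac: "Pr (fst ac) (snd ac)"
    and minim: "\<And>y. Pr (fst y) (snd y) \<Longrightarrow> card (pos (fst ac) (snd ac)) \<le> card (pos (fst y) (snd y))"
    using ex_has_least_nat[of "\<lambda>x. Pr (fst x) (snd x)" "((x1, y1), q0)" "\<lambda>x. card (pos (fst x) (snd x))"]
    by auto
  define a where "a = fst ac"
  define c where "c = snd ac"
  have Pac: "Pr a c" using ac unfolding a_def c_def .
  have min2: "\<And>x y. Pr x y \<Longrightarrow> card (pos a c) \<le> card (pos x y)"
    using minim unfolding a_def c_def by (metis fst_conv snd_conv)
  obtain e1 where e1: "e1 \<in> E" "a \<in> edge_seg e1" "c \<in> edge_seg e1" "a \<in> B" "c \<in> B" "a \<noteq> c"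
    using Pac unfolding Pr_def by blast
  have ns1: "\<not> same_side a c" using not_same_side[OF e1(1-3,6)] .
  have s1: "closed_segment a c \<subseteq> edge_seg e1"
    using e1 seg_e seg_sub_seg by metis
  show False
  proof (cases "pos a c = {}")
    case True
    have "\<forall>p\<in>B. orient a c p \<le> 0"
    proof
      fix p assume "p \<in> B"
      then show "orient a c p \<le> 0" using True unfolding pos_def by (metis (mono_tags, lifting) empty_iff mem_Collect_eq not_less)
    qed
    then show False using base Pac by blast
  next
    case False
    then obtain b where b: "b \<in> B" "orient a c b > 0" unfolding pos_def by auto
    obtain e2 where e2: "e2 \<in> E" "b \<in> edge_seg e2" using cov b by blast
    obtain d where d: "d \<in> B" "d \<noteq> b" "d \<in> edge_seg e2" using two e2 b by blast
    have Pbd: "Pr b d" unfolding Pr_def using b d e2 by blast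
    have Pdb: "Pr d b" unfolding Pr_def using b d e2 by blast
    have ns2: "\<not> same_side b d" using not_same_side[OF e2(1,2) d(3)] d(2) by metis
    have s2: "closed_segment b d \<subseteq> edge_seg e2"
      using e2 d seg_e seg_sub_seg by metis
    have bac: "b \<noteq> a" "b \<noteq> c" using b by auto
    have ne: "e1 \<noteq> e2"
    proof
      assume "e1 = e2"
      then show False using three_B[OF e1(1,2,3), of b] e1 e2 b bac by auto
    qed
    have fd0: "orient a c d \<noteq> 0"
    proof
      assume "orient a c d = 0"
      then have "d \<in> closed_segment a c" using line_seg[OF _ _ e1(6) ns1 B_Q[OF d(1)]] B_bd e1(4,5) by blast
      then have "d \<in> edge_seg e1 \<inter> edge_seg e2 \<inter> B" using s1 d by blast
      then show False using disj ne e1(1) e2(1) by blast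
    qed
    have fd: "orient a c d > 0"
    proof (rule ccontr)
      assume "\<not> orient a c d > 0"
      then have "orient a c d < 0" using fd0 by simp
      then show False using cross[OF nc e1 e2(1,2) d(3) b(1) d(1) d(2)[symmetric] b(2)] by blast
    qed
    have ga0: "orient b d a \<noteq> 0"
    proof
      assume "orient b d a = 0"
      then have "a \<in> closed_segment b d" using line_seg[OF _ _ _ ns2 B_Q[OF e1(4)]] B_bd b(1) d(1,2) by metis
      then have "a \<in> edge_seg e1 \<inter> edge_seg e2 \<inter> B" using s2 e1 by blast
      then show False using disj ne e1(1) e2(1) by blast
    qed
    have gc0: "orient b d c \<noteq> 0"
    proof
      assume "orient b d c = 0"
      then have "c \<in> closed_segment b d" using line_seg[OF _ _ _ ns2 B_Q[OF e1(5)]] B_bd b(1) d(1,2) by metis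
      then have "c \<in> edge_seg e1 \<inter> edge_seg e2 \<inter> B" using s2 e1 by blast
      then show False using disj ne e1(1) e2(1) by blast
    qed
    have c1: "\<not> (orient b d a > 0 \<and> orient b d c < 0)"
      using cross[OF nc e2(1,2) d(3) b(1) d(1) d(2)[symmetric] e1(1,2,3,4,5,6)] by blast
    have c2: "\<not> (orient b d c > 0 \<and> orient b d a < 0)"
      using cross[OF nc e2(1,2) d(3) b(1) d(1) d(2)[symmetric] e1(1,3,2,5,4) e1(6)[symmetric]] by blast
    show False
    proof (cases "orient b d a < 0")
      case True
      then have "orient b d c < 0" using c2 gc0 by linarith
      then have "pos b d \<subset> pos a c" using shrink[OF Pac Pbd b(2) fd True] by blast
      then have "card (pos b d) < card (pos a c)" using finB unfolding pos_def by (simp add: psubset_card_mono)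
      then show False using min2[OF Pbd] by simp
    next
      case False
      then have ga: "orient d b a < 0" using ga0 orient_swap[of d b a] by linarith
      have "orient b d c > 0" using c1 gc0 False ga0 by linarith
      then have gc: "orient d b c < 0" using orient_swap[of d b c] by linarith
      have "pos d b \<subset> pos a c" using shrink[OF Pac Pdb fd b(2) ga gc] by blast
      then have "card (pos d b) < card (pos a c)" using finB unfolding pos_def by (simp add: psubset_card_mono)
      then show False using min2[OF Pdb] by simp
    qed
  qed
qed

end


lemma orient_in_seg:
  fixes u v a c p :: point
  assumes "a \<in> closed_segment u v" "c \<in> closed_segment u v" "p \<in> closed_segment u v"
  shows "orient a c p = 0"
proof -
  obtain s where s: "a = (1 - s) *\<^sub>R u + s *\<^sub>R v" using seg_param assms(1) by blast
  obtain t where t: "c = (1 - t) *\<^sub>R u + t *\<^sub>R v" using seg_param assms(2) by blast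
  obtain r where r: "p = (1 - r) *\<^sub>R u + r *\<^sub>R v" using seg_param assms(3) by blast
  have h: "fst a = (1 - s) * fst u + s * fst v" "snd a = (1 - s) * snd u + s * snd v"
    "fst c = (1 - t) * fst u + t * fst v" "snd c = (1 - t) * snd u + t * snd v"
    "fst p = (1 - r) * fst u + r * fst v" "snd p = (1 - r) * snd u + r * snd v" using s t r by simp_all
  show ?thesis unfolding orient_def h by (simp add: algebra_simps)
qed

context ear
begin

lemma two_by_two:
  assumes xy: "x1 = 1" "x2 = 2" "y1 = 1" "y2 = 2"
    and BB: "B = {(1, 1), (1, 2), (2, 1), (2, 2)}"
    and E2: "E \<subseteq> {e1, e2}" "e1 \<inter> e2 \<noteq> {}"
  shows False
proof -
  have sd: "\<And>p. side p 0 \<longleftrightarrow> fst p = 1" "\<And>p. side p 1 \<longleftrightarrow> fst p = 2"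
    "\<And>p. side p 2 \<longleftrightarrow> snd p = 1" "\<And>p. side p 3 \<longleftrightarrow> snd p = 2"
    using xy by (auto simp: sidef_def)
  have inB: "(1, 1) \<in> B" "(1, 2) \<in> B" "(2, 1) \<in> B" "(2, 2) \<in> B" using BB by auto
  obtain e where e: "e \<in> E" "(1, 1) \<in> edge_seg e" using cov inB by blast
  obtain q where q: "q \<in> B" "q \<noteq> (1, 1)" "q \<in> edge_seg e" using two e inB by blast
  have "q \<noteq> (1, 2)"
  proof
    assume "q = (1, 2)"
    then show False using no_two_on_side[OF e(1,2) q(3), of 0] q(2) sd by simp
  qed
  moreover have "q \<noteq> (2, 1)"
  proof
    assume "q = (2, 1)"
    then show False using no_two_on_side[OF e(1,2) q(3), of 2] q(2) sd by simp
  qed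
  ultimately have q22: "(2, 2) \<in> edge_seg e" using q BB by auto
  obtain e' where e': "e' \<in> E" "(1, 2) \<in> edge_seg e'" using cov inB by blast
  have nee: "e \<noteq> e'"
  proof
    assume "e = e'"
    then show False using three_B[OF e(1,2) q22, of "(1,2)"] e' inB by auto
  qed
  obtain q' where q': "q' \<in> B" "q' \<noteq> (1, 2)" "q' \<in> edge_seg e'" using two e' inB by blast
  have "q' \<noteq> (1, 1)"
  proof
    assume "q' = (1, 1)"
    then show False using no_two_on_side[OF e'(1,2) q'(3), of 0] q'(2) sd by simp
  qed
  moreover have "q' \<noteq> (2, 2)"
  proof
    assume "q' = (2, 2)"
    then show False using no_two_on_side[OF e'(1,2) q'(3), of 3] q'(2) sd by simp
  qed
  ultimately have q21: "(2, 1) \<in> edge_seg e'" using q' BB by auto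
  have "{e, e'} = {e1, e2}" using E2(1) e(1) e'(1) nee by blast
  then have "e \<inter> e' \<noteq> {}" using E2(2) by (metis Int_commute doubleton_eq_iff)
  then obtain X where X: "X \<in> e" "X \<in> e'" by blast
  obtain u v where uv: "u \<noteq> v" "e = {u, v}" "edge_seg e = closed_segment u v" using seg_e e(1) by blast
  obtain u' v' where uv': "u' \<noteq> v'" "e' = {u', v'}" "edge_seg e' = closed_segment u' v'" using seg_e e'(1) by blast
  have Xs: "X \<in> edge_seg e" "X \<in> edge_seg e'" using X uv uv' by auto
  have o1: "orient (1, 1) (2, 2) X = 0" using orient_in_seg e(2) q22 Xs(1) uv(3) by metis
  have o2: "orient (1, 2) (2, 1) X = 0" using orient_in_seg e'(2) q21 Xs(2) uv'(3) by metis
  have "fst X = 3/2" "snd X = 3/2" using o1 o2 unfolding orient_def by simp_all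
  then have Xe: "X = (1 - 1/2) *\<^sub>R ((1::real), (1::real)) + (1/2) *\<^sub>R (2, 2)" by (simp add: prod_eq_iff)
  have Xin: "X \<in> closed_segment (1, 1) (2, 2)" unfolding Xe by (rule seg_mem) auto
  have Xn: "X \<noteq> (1, 1)" "X \<noteq> (2, 2)" using \<open>fst X = 3/2\<close> by auto
  have "X = u \<or> X = v" using X(1) uv(2) by blast
  then show False
    using endpoint_not_inner[of "(1,1)" u v "(2,2)" X] endpoint_not_inner2[of "(1,1)" u v "(2,2)" X]
      e(2) q22 uv(3) Xin Xn by auto
qed

end

lemma conn_card:
  assumes fV: "finite V" and ne: "V \<noteq> {}" and fE: "finite E" and con: "graph_connected V E"
  shows "card V \<le> card E + 1"
proof -
  define R where "R = {(x, y). adj E x y}"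
  obtain r where r: "r \<in> V" using ne by blast
  define dist where "dist w = (LEAST k. (r, w) \<in> R ^^ k)" for w
  have reach: "\<And>w. w \<in> V \<Longrightarrow> \<exists>k. (r, w) \<in> R ^^ k"
  proof -
    fix w assume "w \<in> V"
    then have "(r, w) \<in> R\<^sup>*" using con r unfolding graph_connected_def R_def by blast
    then show "\<exists>k. (r, w) \<in> R ^^ k" by (simp add: rtrancl_power)
  qed
  have dist_in: "\<And>w k. (r, w) \<in> R ^^ k \<Longrightarrow> (r, w) \<in> R ^^ dist w"
    unfolding dist_def by (rule LeastI)
  have dist_le: "\<And>w k. (r, w) \<in> R ^^ k \<Longrightarrow> dist w \<le> k"
    unfolding dist_def by (rule Least_le)
  have parex: "\<And>w. w \<in> V \<Longrightarrow> w \<noteq> r \<Longrightarrow> \<exists>y. (y, w) \<in> R \<and> Suc (dist y) = dist w"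
  proof -
    fix w assume w: "w \<in> V" "w \<noteq> r"
    obtain k where "(r, w) \<in> R ^^ k" using reach w(1) by blast
    then have dw: "(r, w) \<in> R ^^ dist w" by (rule dist_in)
    have "dist w \<noteq> 0" using dw w(2) by (cases "dist w") auto
    then obtain k' where k': "dist w = Suc k'" by (cases "dist w") auto
    then have "(r, w) \<in> R ^^ k' O R" using dw by simp
    then obtain y where y: "(r, y) \<in> R ^^ k'" "(y, w) \<in> R" by blast
    have "dist y \<le> k'" using dist_le y(1) by blast
    moreover have "\<not> dist y < k'"
    proof
      assume lt: "dist y < k'"
      have "(r, y) \<in> R ^^ dist y" using dist_in y(1) by blast
      then have "(r, w) \<in> R ^^ Suc (dist y)" using y(2) by auto
      then have "dist w \<le> Suc (dist y)" using dist_le by blast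
      then show False using lt k' by simp
    qed
    ultimately show "\<exists>y. (y, w) \<in> R \<and> Suc (dist y) = dist w" using y(2) k' by auto
  qed
  define par where "par w = (SOME y. (y, w) \<in> R \<and> Suc (dist y) = dist w)" for w
  have par: "\<And>w. w \<in> V \<Longrightarrow> w \<noteq> r \<Longrightarrow> (par w, w) \<in> R \<and> Suc (dist (par w)) = dist w"
  proof -
    fix w assume w: "w \<in> V" "w \<noteq> r"
    show "(par w, w) \<in> R \<and> Suc (dist (par w)) = dist w" unfolding par_def by (rule someI_ex[OF parex[OF w]])
  qed
  define f where "f w = {par w, w}" for w
  have fE': "f ` (V - {r}) \<subseteq> E"
  proof
    fix x assume "x \<in> f ` (V - {r})"
    then obtain w where w: "w \<in> V" "w \<noteq> r" "x = f w" by blast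
    then have "(par w, w) \<in> R" using par by blast
    then show "x \<in> E" unfolding w(3) f_def R_def adj_def by simp
  qed
  have inj: "inj_on f (V - {r})"
  proof (rule inj_onI)
    fix w w' assume w: "w \<in> V - {r}" "w' \<in> V - {r}" "f w = f w'"
    show "w = w'"
    proof (rule ccontr)
      assume "w \<noteq> w'"
      have "{par w, w} = {par w', w'}" using w(3) unfolding f_def .
      then have "(par w = par w' \<and> w = w') \<or> (par w = w' \<and> w = par w')" by (simp only: doubleton_eq_iff)
      then have pw: "w = par w' \<and> w' = par w" using \<open>w \<noteq> w'\<close> by blast
      have d1: "Suc (dist (par w)) = dist w" using par[of w] w(1) by blast
      have d2: "Suc (dist (par w')) = dist w'" using par[of w'] w(2) by blast
      have a: "par w = w'" and b: "par w' = w" using pw by (metis, metis)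
      have x1: "Suc (dist w') = dist w" using d1 unfolding a .
      have x2: "Suc (dist w) = dist w'" using d2 unfolding b .
      show False using x1 x2 by linarith
    qed
  qed
  have "card (V - {r}) \<le> card E" using card_inj_on_le[OF inj fE' fE] .
  moreover have "card V = card (V - {r}) + 1"
  proof -
    have "card V > 0" using fV r card_gt_0_iff by blast
    then show ?thesis using fV r by simp
  qed
  ultimately show ?thesis by simp
qed


lemma cover_card:
  assumes "finite K" "S \<subseteq> (\<Union>e\<in>K. A e)" "finite S" "\<forall>e\<in>K. card (A e \<inter> S) \<le> c"
  shows "card S \<le> c * card K"
proof -
  have "S = (\<Union>e\<in>K. A e \<inter> S)" using assms(2) by blast
  then have "card S \<le> (\<Sum>e\<in>K. card (A e \<inter> S))" using card_UN_le[OF assms(1)] by metis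
  also have "\<dots> \<le> card K * c" using sum_bounded_above[of K "\<lambda>e. card (A e \<inter> S)" c] assms(4) by simp
  finally show ?thesis by (simp add: mult.commute)
qed

lemma tight_lemma:
  assumes fK: "finite K" and fA: "\<forall>e\<in>K. finite (A e)" and le2: "\<forall>e\<in>K. card (A e) \<le> 2"
    and big: "2 * card K \<le> card (\<Union>e\<in>K. A e)"
  shows "(\<forall>e\<in>K. card (A e) = 2) \<and> (\<forall>e1\<in>K. \<forall>e2\<in>K. e1 \<noteq> e2 \<longrightarrow> A e1 \<inter> A e2 = {})"
proof (intro conjI ballI impI)
  fix e0 assume e0: "e0 \<in> K"
  show "card (A e0) = 2"
  proof (rule ccontr)
    assume "card (A e0) \<noteq> 2"
    moreover have "card (A e0) \<le> 2" using le2 e0 by blast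
    ultimately have c0: "card (A e0) \<le> 1" by linarith
    have "card (\<Union>e\<in>K. A e) \<le> (\<Sum>e\<in>K. card (A e))" using card_UN_le[OF fK] .
    also have "\<dots> = card (A e0) + (\<Sum>e\<in>K - {e0}. card (A e))" using sum.remove[OF fK e0] .
    also have "(\<Sum>e\<in>K - {e0}. card (A e)) \<le> card (K - {e0}) * 2"
      using sum_bounded_above[of "K - {e0}" "\<lambda>e. card (A e)" 2] le2 by simp
    also have "card (K - {e0}) = card K - 1" using fK e0 by simp
    finally have "card (\<Union>e\<in>K. A e) \<le> card (A e0) + (card K - 1) * 2" by simp
    moreover have "card K \<ge> 1"
    proof -
      have "K \<noteq> {}" using e0 by blast
      then show ?thesis using fK by (simp add: Suc_le_eq card_gt_0_iff)
    qed
    ultimately show False using big c0 by linarith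
  qed
next
  fix e1 e2 assume e: "e1 \<in> K" "e2 \<in> K" "e1 \<noteq> e2"
  show "A e1 \<inter> A e2 = {}"
  proof (rule ccontr)
    assume ne: "A e1 \<inter> A e2 \<noteq> {}"
    have f12: "finite (A e1)" "finite (A e2)" using fA e by auto
    then have "card (A e1 \<inter> A e2) \<ge> 1" using ne by (simp add: Suc_le_eq card_gt_0_iff)
    moreover have "card (A e1) + card (A e2) = card (A e1 \<union> A e2) + card (A e1 \<inter> A e2)"
      using card_Un_Int[OF f12] .
    moreover have "card (A e1) \<le> 2" "card (A e2) \<le> 2" using le2 e by blast+
    ultimately have u: "card (A e1 \<union> A e2) \<le> 3" by linarith
    have eq: "(\<Union>e\<in>K. A e) = (A e1 \<union> A e2) \<union> (\<Union>e\<in>K - {e1, e2}. A e)" using e by blast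
    have "card (\<Union>e\<in>K. A e) \<le> card (A e1 \<union> A e2) + card (\<Union>e\<in>K - {e1, e2}. A e)"
      unfolding eq by (rule card_Un_le)
    also have "card (\<Union>e\<in>K - {e1, e2}. A e) \<le> (\<Sum>e\<in>K - {e1, e2}. card (A e))"
      by (rule card_UN_le) (use fK in simp)
    also have "(\<Sum>e\<in>K - {e1, e2}. card (A e)) \<le> card (K - {e1, e2}) * 2"
      using sum_bounded_above[of "K - {e1, e2}" "\<lambda>e. card (A e)" 2] le2 by simp
    also have "card (K - {e1, e2}) = card K - 2" using fK e by (simp add: card_Diff_subset)
    finally have "card (\<Union>e\<in>K. A e) \<le> card (A e1 \<union> A e2) + (card K - 2) * 2" by simp
    moreover have "card K \<ge> 2"
    proof -
      have "{e1, e2} \<subseteq> K" using e by blast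
      then have "card {e1, e2} \<le> card K" using fK card_mono by blast
      then show ?thesis using e(3) by simp
    qed
    ultimately show False using big u by linarith
  qed
qed


locale gsetup =
  fixes n m :: nat and V :: "point set" and E :: "point set set"
  assumes n1: "n \<ge> 1" and m1: "m \<ge> 1" and gt: "geometric_tree V E" and cv: "covers E (grid n m)"
begin

lemma finV: "finite V" and Ene: "E \<noteq> {}" and conn: "graph_connected V E"
  and edgesV: "\<forall>e\<in>E. \<exists>u v. u \<in> V \<and> v \<in> V \<and> u \<noteq> v \<and> e = {u, v}"
  using gt unfolding geometric_tree_def is_tree_def by blast+

lemma Vne: "V \<noteq> {}"
proof -
  obtain e where "e \<in> E" using Ene by blast
  then obtain u v where "u \<in> V" using edgesV by blast
  then show ?thesis by blast
qed

lemma finE: "finite E"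
proof -
  have "E \<subseteq> Pow V"
  proof
    fix e assume "e \<in> E"
    then obtain u v where "u \<in> V" "v \<in> V" "e = {u, v}" using edgesV by blast
    then show "e \<in> Pow V" by simp
  qed
  then show ?thesis using finV finite_subset by (metis finite_Pow_iff)
qed

lemma segE: "e \<in> E \<Longrightarrow> \<exists>u v. u \<in> V \<and> v \<in> V \<and> u \<noteq> v \<and> e = {u, v} \<and> edge_seg e = closed_segment u v"
proof -
  assume "e \<in> E"
  then obtain u v where "u \<in> V" "v \<in> V" "u \<noteq> v" "e = {u, v}" using edgesV by blast
  then show ?thesis by (intro exI[of _ u] exI[of _ v]) (simp add: edge_seg_pair)
qed

lemma edges2: "\<forall>e\<in>E. \<exists>u v. u \<noteq> v \<and> e = {u, v}" using edgesV by blast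

lemma cover_grid: "p \<in> grid n m \<Longrightarrow> \<exists>e\<in>E. p \<in> edge_seg e"
  using cv unfolding covers_def by blast

definition freec :: "nat \<Rightarrow> bool" where "freec i \<longleftrightarrow> \<not> (\<exists>e\<in>E. edge_seg e \<subseteq> {p. fst p = real i})"
definition freer :: "nat \<Rightarrow> bool" where "freer j \<longleftrightarrow> \<not> (\<exists>e\<in>E. edge_seg e \<subseteq> {p. snd p = real j})"
definition "C = {i \<in> {1..n}. freec i}"
definition "R = {j \<in> {1..m}. freer j}"

lemma nofree_col:
  assumes "C = {}"
  shows "2 * n - 1 \<le> card E"
proof -
  define Vi where "Vi i = {p \<in> V. fst p = real i}" for i :: nat
  have two: "2 \<le> card (Vi i)" if i: "i \<in> {1..n}" for i
  proof -
    have "\<not> freec i" using assms i unfolding C_def by blast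
    then obtain e where e: "e \<in> E" "edge_seg e \<subseteq> {p. fst p = real i}" unfolding freec_def by blast
    obtain u v where uv: "u \<in> V" "v \<in> V" "u \<noteq> v" "e = {u, v}" "edge_seg e = closed_segment u v"
      using segE e(1) by blast
    have "u \<in> edge_seg e" "v \<in> edge_seg e" using uv(5) by auto
    then have "fst u = real i" "fst v = real i" using e(2) by auto
    then have "{u, v} \<subseteq> Vi i" using uv(1,2) unfolding Vi_def by simp
    moreover have "finite (Vi i)" using finV unfolding Vi_def by simp
    ultimately have "card {u, v} \<le> card (Vi i)" by (rule card_mono[rotated])
    then show ?thesis using uv(3) by simp
  qed
  have fin: "\<forall>i\<in>{1..n}. finite (Vi i)" using finV unfolding Vi_def by simp
  have dis: "\<forall>i\<in>{1..n}. \<forall>j\<in>{1..n}. i \<noteq> j \<longrightarrow> Vi i \<inter> Vi j = {}" unfolding Vi_def by auto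
  have "card (\<Union>i\<in>{1..n}. Vi i) = (\<Sum>i\<in>{1..n}. card (Vi i))"
    using card_UN_disjoint[of "{1..n}" Vi] fin dis by simp
  also have "\<dots> \<ge> card {1..n} * 2" using sum_bounded_below[of "{1..n}" 2 "\<lambda>i. card (Vi i)"] two by simp
  finally have "2 * n \<le> card (\<Union>i\<in>{1..n}. Vi i)" by simp
  also have "\<dots> \<le> card V" using finV unfolding Vi_def by (intro card_mono) auto
  also have "\<dots> \<le> card E + 1" using conn_card[OF finV Vne finE conn] .
  finally show ?thesis by simp
qed

lemma nofree_row:
  assumes "R = {}"
  shows "2 * m - 1 \<le> card E"
proof -
  define Vi where "Vi i = {p \<in> V. snd p = real i}" for i :: nat
  have two: "2 \<le> card (Vi i)" if i: "i \<in> {1..m}" for i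
  proof -
    have "\<not> freer i" using assms i unfolding R_def by blast
    then obtain e where e: "e \<in> E" "edge_seg e \<subseteq> {p. snd p = real i}" unfolding freer_def by blast
    obtain u v where uv: "u \<in> V" "v \<in> V" "u \<noteq> v" "e = {u, v}" "edge_seg e = closed_segment u v"
      using segE e(1) by blast
    have "u \<in> edge_seg e" "v \<in> edge_seg e" using uv(5) by auto
    then have "snd u = real i" "snd v = real i" using e(2) by auto
    then have "{u, v} \<subseteq> Vi i" using uv(1,2) unfolding Vi_def by simp
    moreover have "finite (Vi i)" using finV unfolding Vi_def by simp
    ultimately have "card {u, v} \<le> card (Vi i)" by (rule card_mono[rotated])
    then show ?thesis using uv(3) by simp
  qed
  have fin: "\<forall>i\<in>{1..m}. finite (Vi i)" using finV unfolding Vi_def by simp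
  have dis: "\<forall>i\<in>{1..m}. \<forall>j\<in>{1..m}. i \<noteq> j \<longrightarrow> Vi i \<inter> Vi j = {}" unfolding Vi_def by auto
  have "card (\<Union>i\<in>{1..m}. Vi i) = (\<Sum>i\<in>{1..m}. card (Vi i))"
    using card_UN_disjoint[of "{1..m}" Vi] fin dis by simp
  also have "\<dots> \<ge> card {1..m} * 2" using sum_bounded_below[of "{1..m}" 2 "\<lambda>i. card (Vi i)"] two by simp
  finally have "2 * m \<le> card (\<Union>i\<in>{1..m}. Vi i)" by simp
  also have "\<dots> \<le> card V" using finV unfolding Vi_def by (intro card_mono) auto
  also have "\<dots> \<le> card E + 1" using conn_card[OF finV Vne finE conn] .
  finally show ?thesis by simp
qed

end


locale gfree = gsetup +
  assumes Cne: "C \<noteq> {}" and Rne: "R \<noteq> {}"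
begin

definition "i1 = Min C"
definition "i2 = Max C"
definition "j1 = Min R"
definition "j2 = Max R"

lemma finC: "finite C" unfolding C_def by simp
lemma finR: "finite R" unfolding R_def by simp

lemma iprops: "i1 \<in> C" "i2 \<in> C" "1 \<le> i1" "i1 \<le> i2" "i2 \<le> n" "freec i1" "freec i2"
  and inotfree: "\<And>i. i \<in> {1..n} \<Longrightarrow> i < i1 \<or> i2 < i \<Longrightarrow> \<not> freec i"
proof -
  show c1: "i1 \<in> C" unfolding i1_def using finC Cne by simp
  show c2: "i2 \<in> C" unfolding i2_def using finC Cne by simp
  show "1 \<le> i1" using c1 unfolding C_def by simp
  show "i1 \<le> i2" using Min_le[OF finC c2] unfolding i1_def .
  show "i2 \<le> n" using c2 unfolding C_def by simp
  show "freec i1" using c1 unfolding C_def by simp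
  show "freec i2" using c2 unfolding C_def by simp
  fix i assume i: "i \<in> {1..n}" "i < i1 \<or> i2 < i"
  show "\<not> freec i"
  proof
    assume "freec i"
    then have "i \<in> C" using i(1) unfolding C_def by simp
    then have "i1 \<le> i" "i \<le> i2" unfolding i1_def i2_def using finC by simp_all
    then show False using i(2) by simp
  qed
qed

lemma jprops: "j1 \<in> R" "j2 \<in> R" "1 \<le> j1" "j1 \<le> j2" "j2 \<le> m" "freer j1" "freer j2"
  and jnotfree: "\<And>j. j \<in> {1..m} \<Longrightarrow> j < j1 \<or> j2 < j \<Longrightarrow> \<not> freer j"
proof -
  show c1: "j1 \<in> R" unfolding j1_def using finR Rne by simp
  show c2: "j2 \<in> R" unfolding j2_def using finR Rne by simp
  show "1 \<le> j1" using c1 unfolding R_def by simp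
  show "j1 \<le> j2" using Min_le[OF finR c2] unfolding j1_def .
  show "j2 \<le> m" using c2 unfolding R_def by simp
  show "freer j1" using c1 unfolding R_def by simp
  show "freer j2" using c2 unfolding R_def by simp
  fix j assume j: "j \<in> {1..m}" "j < j1 \<or> j2 < j"
  show "\<not> freer j"
  proof
    assume "freer j"
    then have "j \<in> R" using j(1) unfolding R_def by simp
    then have "j1 \<le> j" "j \<le> j2" unfolding j1_def j2_def using finR by simp_all
    then show False using j(2) by simp
  qed
qed

definition "Io = {i \<in> {1..n}. i < i1 \<or> i2 < i}"
definition "Jo = {j \<in> {1..m}. j < j1 \<or> j2 < j}"

lemma card_Io: "card Io = (i1 - 1) + (n - i2)"
proof -
  have "Io = {1..<i1} \<union> {Suc i2..n}" unfolding Io_def using iprops by auto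
  moreover have "{1..<i1} \<inter> {Suc i2..n} = {}" using iprops by auto
  ultimately show ?thesis by (simp add: card_Un_disjoint)
qed

lemma card_Jo: "card Jo = (j1 - 1) + (m - j2)"
proof -
  have "Jo = {1..<j1} \<union> {Suc j2..m}" unfolding Jo_def using jprops by auto
  moreover have "{1..<j1} \<inter> {Suc j2..m} = {}" using jprops by auto
  ultimately show ?thesis by (simp add: card_Un_disjoint)
qed

definition "gc i = (SOME e. e \<in> E \<and> edge_seg e \<subseteq> {p. fst p = real i})"
definition "hr j = (SOME e. e \<in> E \<and> edge_seg e \<subseteq> {p. snd p = real j})"

lemma gc: "i \<in> Io \<Longrightarrow> gc i \<in> E \<and> edge_seg (gc i) \<subseteq> {p. fst p = real i}"
proof -
  assume "i \<in> Io"
  then have "\<not> freec i" using inotfree unfolding Io_def by blast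
  then have "\<exists>e. e \<in> E \<and> edge_seg e \<subseteq> {p. fst p = real i}" unfolding freec_def by blast
  then show ?thesis unfolding gc_def by (rule someI_ex)
qed

lemma hr: "j \<in> Jo \<Longrightarrow> hr j \<in> E \<and> edge_seg (hr j) \<subseteq> {p. snd p = real j}"
proof -
  assume "j \<in> Jo"
  then have "\<not> freer j" using jnotfree unfolding Jo_def by blast
  then have "\<exists>e. e \<in> E \<and> edge_seg e \<subseteq> {p. snd p = real j}" unfolding freer_def by blast
  then show ?thesis unfolding hr_def by (rule someI_ex)
qed

lemma seg2: "e \<in> E \<Longrightarrow> \<exists>u v. u \<noteq> v \<and> u \<in> edge_seg e \<and> v \<in> edge_seg e"
proof -
  assume "e \<in> E"
  then obtain u v where "u \<noteq> v" "edge_seg e = closed_segment u v" using segE by blast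
  then show ?thesis by (intro exI[of _ u] exI[of _ v]) simp
qed

lemma outer_count:
  assumes S: "S \<subseteq> {p. real i1 \<le> fst p \<and> fst p \<le> real i2 \<and> real j1 \<le> snd p \<and> snd p \<le> real j2}"
  shows "card {e \<in> E. edge_seg e \<inter> S \<noteq> {}} + card Io + card Jo \<le> card E"
proof -
  define K where "K = {e \<in> E. edge_seg e \<inter> S \<noteq> {}}"
  have injg: "inj_on gc Io"
  proof (rule inj_onI)
    fix i i' assume ii: "i \<in> Io" "i' \<in> Io" "gc i = gc i'"
    obtain u v where "u \<noteq> v" "u \<in> edge_seg (gc i)" "v \<in> edge_seg (gc i)" using seg2 gc[OF ii(1)] by blast
    then have "fst u = real i" "fst u = real i'" using gc[OF ii(1)] gc[OF ii(2)] ii(3) by auto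
    then show "i = i'" by simp
  qed
  have injh: "inj_on hr Jo"
  proof (rule inj_onI)
    fix i i' assume ii: "i \<in> Jo" "i' \<in> Jo" "hr i = hr i'"
    obtain u v where "u \<noteq> v" "u \<in> edge_seg (hr i)" "v \<in> edge_seg (hr i)" using seg2 hr[OF ii(1)] by blast
    then have "snd u = real i" "snd u = real i'" using hr[OF ii(1)] hr[OF ii(2)] ii(3) by auto
    then show "i = i'" by simp
  qed
  have d1: "K \<inter> gc ` Io = {}"
  proof (rule ccontr)
    assume "K \<inter> gc ` Io \<noteq> {}"
    then obtain i where i: "i \<in> Io" "gc i \<in> K" by blast
    then obtain p where p: "p \<in> edge_seg (gc i)" "p \<in> S" unfolding K_def by blast
    have "fst p = real i" using p(1) gc[OF i(1)] by blast
    moreover have "real i1 \<le> fst p" "fst p \<le> real i2" using p(2) S by auto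
    ultimately have "i1 \<le> i" "i \<le> i2" by simp_all
    then show False using i(1) unfolding Io_def by simp
  qed
  have d2: "K \<inter> hr ` Jo = {}"
  proof (rule ccontr)
    assume "K \<inter> hr ` Jo \<noteq> {}"
    then obtain i where i: "i \<in> Jo" "hr i \<in> K" by blast
    then obtain p where p: "p \<in> edge_seg (hr i)" "p \<in> S" unfolding K_def by blast
    have "snd p = real i" using p(1) hr[OF i(1)] by blast
    moreover have "real j1 \<le> snd p" "snd p \<le> real j2" using p(2) S by auto
    ultimately have "j1 \<le> i" "i \<le> j2" by simp_all
    then show False using i(1) unfolding Jo_def by simp
  qed
  have d3: "gc ` Io \<inter> hr ` Jo = {}"
  proof (rule ccontr)
    assume "gc ` Io \<inter> hr ` Jo \<noteq> {}"
    then obtain i j where ij: "i \<in> Io" "j \<in> Jo" "gc i = hr j" by blast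
    obtain u v where uv: "u \<noteq> v" "u \<in> edge_seg (gc i)" "v \<in> edge_seg (gc i)" using seg2 gc[OF ij(1)] by blast
    have "fst u = real i" "fst v = real i" using uv gc[OF ij(1)] by auto
    moreover have "snd u = real j" "snd v = real j" using uv hr[OF ij(2)] ij(3) by auto
    ultimately have "u = v" by (simp add: prod_eq_iff)
    then show False using uv(1) by simp
  qed
  have fK: "finite K" using finE unfolding K_def by simp
  have fI: "finite Io" "finite Jo" unfolding Io_def Jo_def by simp_all
  have "card (K \<union> gc ` Io \<union> hr ` Jo) = card K + card (gc ` Io) + card (hr ` Jo)"
  proof -
    have "card (K \<union> gc ` Io) = card K + card (gc ` Io)" using d1 fK fI by (simp add: card_Un_disjoint)
    moreover have "(K \<union> gc ` Io) \<inter> hr ` Jo = {}" using d2 d3 by blast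
    ultimately show ?thesis using fK fI by (simp add: card_Un_disjoint)
  qed
  also have "\<dots> = card K + card Io + card Jo" using card_image[OF injg] card_image[OF injh] by simp
  finally have eq: "card (K \<union> gc ` Io \<union> hr ` Jo) = card K + card Io + card Jo" .
  have "K \<union> gc ` Io \<union> hr ` Jo \<subseteq> E" using gc hr unfolding K_def by auto
  then have "card (K \<union> gc ` Io \<union> hr ` Jo) \<le> card E" using finE by (rule card_mono[rotated])
  then show ?thesis using eq unfolding K_def by simp
qed

end


context gfree
begin

lemma onepoint_col:
  assumes "e \<in> E" "a \<in> edge_seg e" "b \<in> edge_seg e" "fst a = real i1" "fst b = real i1"
  shows "a = b"
proof (rule ccontr)
  assume ne: "a \<noteq> b"
  obtain u v where uv: "edge_seg e = closed_segment u v" using segE assms(1) by blast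
  have "edge_seg e \<subseteq> {p. fst p = real i1}" using seg_fst_const[of a u v b] assms ne uv by simp
  then show False using iprops(6) assms(1) unfolding freec_def by blast
qed

lemma onepoint_row:
  assumes "e \<in> E" "a \<in> edge_seg e" "b \<in> edge_seg e" "snd a = real j1" "snd b = real j1"
  shows "a = b"
proof (rule ccontr)
  assume ne: "a \<noteq> b"
  obtain u v where uv: "edge_seg e = closed_segment u v" using segE assms(1) by blast
  have "edge_seg e \<subseteq> {p. snd p = real j1}" using seg_snd_const[of a u v b] assms ne uv by simp
  then show False using jprops(6) assms(1) unfolding freer_def by blast
qed

lemma degen_col:
  assumes eq: "i1 = i2"
  shows "n + m - 1 \<le> card E"
proof -
  define S where "S = (\<lambda>j. (real i1, real j)) ` {j1..j2}"
  have fS: "finite S" unfolding S_def by simp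
  have cS: "card S = j2 - j1 + 1"
  proof -
    have "inj_on (\<lambda>j. (real i1, real j)) {j1..j2}" by (rule inj_onI) simp
    then show ?thesis unfolding S_def using jprops by (simp add: card_image)
  qed
  have Sbox: "S \<subseteq> {p. real i1 \<le> fst p \<and> fst p \<le> real i2 \<and> real j1 \<le> snd p \<and> snd p \<le> real j2}"
    unfolding S_def using eq by auto
  have Sgrid: "S \<subseteq> grid n m"
  proof
    fix p assume "p \<in> S"
    then obtain j where j: "j \<in> {j1..j2}" "p = (real i1, real j)" unfolding S_def by blast
    have "i1 \<in> {1..n}" "j \<in> {1..m}" using iprops jprops j(1) by auto
    then show "p \<in> grid n m" unfolding grid_def using j(2) by blast
  qed
  define K where "K = {e \<in> E. edge_seg e \<inter> S \<noteq> {}}"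
  have fK: "finite K" using finE unfolding K_def by simp
  have covS: "S \<subseteq> (\<Union>e\<in>K. edge_seg e)"
  proof
    fix p assume p: "p \<in> S"
    then obtain e where "e \<in> E" "p \<in> edge_seg e" using cover_grid Sgrid by blast
    then show "p \<in> (\<Union>e\<in>K. edge_seg e)" using p unfolding K_def by blast
  qed
  have le1: "\<forall>e\<in>K. card (edge_seg e \<inter> S) \<le> 1"
  proof
    fix e assume e: "e \<in> K"
    have "finite (edge_seg e \<inter> S)" using fS by simp
    moreover have "\<forall>a\<in>edge_seg e \<inter> S. \<forall>b\<in>edge_seg e \<inter> S. a = b"
    proof (intro ballI)
      fix a b assume ab: "a \<in> edge_seg e \<inter> S" "b \<in> edge_seg e \<inter> S"
      have "fst a = real i1" "fst b = real i1" using ab unfolding S_def by auto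
      then show "a = b" using onepoint_col[of e a b] e ab unfolding K_def by blast
    qed
    ultimately show "card (edge_seg e \<inter> S) \<le> 1" using card_le_Suc0_iff_eq[of "edge_seg e \<inter> S"] by simp
  qed
  have "card S \<le> 1 * card K" using cover_card[OF fK covS fS le1] .
  moreover have "card K + card Io + card Jo \<le> card E" using outer_count[OF Sbox] unfolding K_def .
  ultimately show ?thesis using cS card_Io card_Jo eq iprops jprops by linarith
qed

lemma degen_row:
  assumes eq: "j1 = j2"
  shows "n + m - 1 \<le> card E"
proof -
  define S where "S = (\<lambda>i. (real i, real j1)) ` {i1..i2}"
  have fS: "finite S" unfolding S_def by simp
  have cS: "card S = i2 - i1 + 1"
  proof -
    have "inj_on (\<lambda>i. (real i, real j1)) {i1..i2}" by (rule inj_onI) simp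
    then show ?thesis unfolding S_def using iprops by (simp add: card_image)
  qed
  have Sbox: "S \<subseteq> {p. real i1 \<le> fst p \<and> fst p \<le> real i2 \<and> real j1 \<le> snd p \<and> snd p \<le> real j2}"
    unfolding S_def using eq by auto
  have Sgrid: "S \<subseteq> grid n m"
  proof
    fix p assume "p \<in> S"
    then obtain i where i: "i \<in> {i1..i2}" "p = (real i, real j1)" unfolding S_def by blast
    have "i \<in> {1..n}" "j1 \<in> {1..m}" using iprops jprops i(1) by auto
    then show "p \<in> grid n m" unfolding grid_def using i(2) by blast
  qed
  define K where "K = {e \<in> E. edge_seg e \<inter> S \<noteq> {}}"
  have fK: "finite K" using finE unfolding K_def by simp
  have covS: "S \<subseteq> (\<Union>e\<in>K. edge_seg e)"
  proof
    fix p assume p: "p \<in> S"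
    then obtain e where "e \<in> E" "p \<in> edge_seg e" using cover_grid Sgrid by blast
    then show "p \<in> (\<Union>e\<in>K. edge_seg e)" using p unfolding K_def by blast
  qed
  have le1: "\<forall>e\<in>K. card (edge_seg e \<inter> S) \<le> 1"
  proof
    fix e assume e: "e \<in> K"
    have "finite (edge_seg e \<inter> S)" using fS by simp
    moreover have "\<forall>a\<in>edge_seg e \<inter> S. \<forall>b\<in>edge_seg e \<inter> S. a = b"
    proof (intro ballI)
      fix a b assume ab: "a \<in> edge_seg e \<inter> S" "b \<in> edge_seg e \<inter> S"
      have "snd a = real j1" "snd b = real j1" using ab unfolding S_def by auto
      then show "a = b" using onepoint_row[of e a b] e ab unfolding K_def by blast
    qed
    ultimately show "card (edge_seg e \<inter> S) \<le> 1" using card_le_Suc0_iff_eq[of "edge_seg e \<inter> S"] by simp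
  qed
  have "card S \<le> 1 * card K" using cover_card[OF fK covS fS le1] .
  moreover have "card K + card Io + card Jo \<le> card E" using outer_count[OF Sbox] unfolding K_def .
  ultimately show ?thesis using cS card_Io card_Jo eq iprops jprops by linarith
qed

end


context gfree
begin

definition "Bd = (\<lambda>(i, j). (real i, real j)) ` {(i, j). i \<in> {i1..i2} \<and> j \<in> {j1..j2} \<and> (i = i1 \<or> i = i2 \<or> j = j1 \<or> j = j2)}"

lemma Bd_mem: "p \<in> Bd \<longleftrightarrow> (\<exists>i j. p = (real i, real j) \<and> i1 \<le> i \<and> i \<le> i2 \<and> j1 \<le> j \<and> j \<le> j2 \<and> (i = i1 \<or> i = i2 \<or> j = j1 \<or> j = j2))"
  unfolding Bd_def by auto

lemma finBd: "finite Bd"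
proof -
  have "{(i, j). i \<in> {i1..i2} \<and> j \<in> {j1..j2} \<and> (i = i1 \<or> i = i2 \<or> j = j1 \<or> j = j2)} \<subseteq> {i1..i2} \<times> {j1..j2}" by auto
  then have "finite {(i, j). i \<in> {i1..i2} \<and> j \<in> {j1..j2} \<and> (i = i1 \<or> i = i2 \<or> j = j1 \<or> j = j2)}"
    using finite_subset by blast
  then show ?thesis unfolding Bd_def by simp
qed

lemma box0_inst: "box0 E (real i1) (real i2) (real j1) (real j2)"
proof
  show "\<forall>e\<in>E. \<exists>u v. u \<noteq> v \<and> e = {u, v}" using edges2 .
  show "\<forall>e\<in>E. \<forall>k<4. \<not> edge_seg e \<subseteq> {p. sidef (real i1) (real i2) (real j1) (real j2) p k}"
  proof (intro ballI allI impI)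
    fix e k assume e: "e \<in> E" and k: "k < (4::nat)"
    then have "k = 0 \<or> k = 1 \<or> k = 2 \<or> k = 3" by auto
    then show "\<not> edge_seg e \<subseteq> {p. sidef (real i1) (real i2) (real j1) (real j2) p k}"
      using iprops(6,7) jprops(6,7) e unfolding freec_def freer_def sidef_def by auto
  qed
qed

lemma Bd_box: "Bd \<subseteq> {p. real i1 \<le> fst p \<and> fst p \<le> real i2 \<and> real j1 \<le> snd p \<and> snd p \<le> real j2}"
  unfolding Bd_def by auto

lemma Bd_onbd: "p \<in> Bd \<Longrightarrow> onbdf (real i1) (real i2) (real j1) (real j2) p"
proof -
  assume "p \<in> Bd"
  then obtain i j where ij: "p = (real i, real j)" "i1 \<le> i" "i \<le> i2" "j1 \<le> j" "j \<le> j2" "i = i1 \<or> i = i2 \<or> j = j1 \<or> j = j2"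
    unfolding Bd_mem by blast
  have q: "inQ (real i1) (real i2) (real j1) (real j2) p" using ij unfolding inQ_def by simp
  have "\<exists>k<4. sidef (real i1) (real i2) (real j1) (real j2) p k"
  proof -
    consider "i = i1" | "i = i2" | "j = j1" | "j = j2" using ij(6) by blast
    then show ?thesis
    proof cases
      case 1 then show ?thesis using ij(1) by (intro exI[of _ 0]) (simp add: sidef_def)
    next
      case 2 then show ?thesis using ij(1) by (intro exI[of _ 1]) (simp add: sidef_def)
    next
      case 3 then show ?thesis using ij(1) by (intro exI[of _ 2]) (simp add: sidef_def)
    next
      case 4 then show ?thesis using ij(1) by (intro exI[of _ 3]) (simp add: sidef_def)
    qed
  qed
  then show ?thesis using q unfolding onbdf_def by blast
qed

lemma Bd_grid: "Bd \<subseteq> grid n m"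
proof
  fix p assume "p \<in> Bd"
  then obtain i j where ij: "p = (real i, real j)" "i1 \<le> i" "i \<le> i2" "j1 \<le> j" "j \<le> j2"
    unfolding Bd_mem by blast
  have "i \<in> {1..n}" "j \<in> {1..m}" using ij iprops jprops by auto
  then show "p \<in> grid n m" unfolding grid_def using ij(1) by blast
qed

lemma le2: "e \<in> E \<Longrightarrow> card (edge_seg e \<inter> Bd) \<le> 2"
proof (rule ccontr)
  assume e: "e \<in> E" and "\<not> card (edge_seg e \<inter> Bd) \<le> 2"
  then have "3 \<le> card (edge_seg e \<inter> Bd)" by simp
  then obtain T where T: "T \<subseteq> edge_seg e \<inter> Bd" "card T = 3" by (rule obtain_subset_with_card_n)
  then obtain x y z where xyz: "T = {x, y, z}" "x \<noteq> y" "y \<noteq> z" "x \<noteq> z" unfolding card_3_iff by blast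
  have "x \<in> edge_seg e \<inter> Bd" "y \<in> edge_seg e \<inter> Bd" "z \<in> edge_seg e \<inter> Bd" using T(1) xyz(1) by auto
  then show False using box0.three[OF box0_inst e, of x y z] xyz Bd_onbd by blast
qed

lemma card_Bd:
  assumes "i1 < i2" "j1 < j2"
  shows "2 * (i2 - i1) + 2 * (j2 - j1) \<le> card Bd"
proof -
  define bot where "bot = (\<lambda>i. (real i, real j1)) ` {i1..<i2}"
  define rgt where "rgt = (\<lambda>j. (real i2, real j)) ` {j1..<j2}"
  define top where "top = (\<lambda>i. (real i, real j2)) ` {i1<..i2}"
  define lft where "lft = (\<lambda>j. (real i1, real j)) ` {j1<..j2}"
  have cb: "card bot = i2 - i1" unfolding bot_def by (subst card_image) (auto intro: inj_onI)
  have cr: "card rgt = j2 - j1" unfolding rgt_def by (subst card_image) (auto intro: inj_onI)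
  have ct: "card top = i2 - i1" unfolding top_def by (subst card_image) (auto intro: inj_onI)
  have cl: "card lft = j2 - j1" unfolding lft_def by (subst card_image) (auto intro: inj_onI)
  have f: "finite bot" "finite rgt" "finite top" "finite lft" unfolding bot_def rgt_def top_def lft_def by simp_all
  have d1: "bot \<inter> rgt = {}" unfolding bot_def rgt_def by auto
  have d2: "(bot \<union> rgt) \<inter> top = {}" unfolding bot_def rgt_def top_def using assms by auto
  have d3: "(bot \<union> rgt \<union> top) \<inter> lft = {}" unfolding bot_def rgt_def top_def lft_def using assms by auto
  have "card (bot \<union> rgt \<union> top \<union> lft) = card bot + card rgt + card top + card lft"
    using f d1 d2 d3 by (simp add: card_Un_disjoint)
  moreover have "bot \<union> rgt \<union> top \<union> lft \<subseteq> Bd"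
  proof -
    have "bot \<subseteq> Bd" unfolding bot_def image_subset_iff Bd_mem
    proof
      fix i assume "i \<in> {i1..<i2}" then show "\<exists>i' j'. (real i, real j1) = (real i', real j') \<and> i1 \<le> i' \<and> i' \<le> i2 \<and> j1 \<le> j' \<and> j' \<le> j2 \<and> (i' = i1 \<or> i' = i2 \<or> j' = j1 \<or> j' = j2)"
        using assms by (intro exI[of _ i] exI[of _ j1]) auto
    qed
    moreover have "rgt \<subseteq> Bd" unfolding rgt_def image_subset_iff Bd_mem
    proof
      fix j assume "j \<in> {j1..<j2}" then show "\<exists>i' j'. (real i2, real j) = (real i', real j') \<and> i1 \<le> i' \<and> i' \<le> i2 \<and> j1 \<le> j' \<and> j' \<le> j2 \<and> (i' = i1 \<or> i' = i2 \<or> j' = j1 \<or> j' = j2)"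
        using assms by (intro exI[of _ i2] exI[of _ j]) auto
    qed
    moreover have "top \<subseteq> Bd" unfolding top_def image_subset_iff Bd_mem
    proof
      fix i assume "i \<in> {i1<..i2}" then show "\<exists>i' j'. (real i, real j2) = (real i', real j') \<and> i1 \<le> i' \<and> i' \<le> i2 \<and> j1 \<le> j' \<and> j' \<le> j2 \<and> (i' = i1 \<or> i' = i2 \<or> j' = j1 \<or> j' = j2)"
        using assms by (intro exI[of _ i] exI[of _ j2]) auto
    qed
    moreover have "lft \<subseteq> Bd" unfolding lft_def image_subset_iff Bd_mem
    proof
      fix j assume "j \<in> {j1<..j2}" then show "\<exists>i' j'. (real i1, real j) = (real i', real j') \<and> i1 \<le> i' \<and> i' \<le> i2 \<and> j1 \<le> j' \<and> j' \<le> j2 \<and> (i' = i1 \<or> i' = i2 \<or> j' = j1 \<or> j' = j2)"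
        using assms by (intro exI[of _ i1] exI[of _ j]) auto
    qed
    ultimately show ?thesis by blast
  qed
  then have "card (bot \<union> rgt \<union> top \<union> lft) \<le> card Bd" using finBd by (rule card_mono[rotated])
  ultimately show ?thesis using cb cr ct cl by simp
qed

end


context gfree
begin

lemma nondeg:
  assumes lt: "i1 < i2" "j1 < j2"
  shows "n + m - 2 \<le> card E \<and> (card E = n + m - 2 \<longrightarrow> ear E (real i1) (real i2) (real j1) (real j2) Bd)"
proof -
  define K where "K = {e \<in> E. edge_seg e \<inter> Bd \<noteq> {}}"
  have fK: "finite K" using finE unfolding K_def by simp
  have covB: "Bd \<subseteq> (\<Union>e\<in>K. edge_seg e)"
  proof
    fix p assume p: "p \<in> Bd"
    then obtain e where "e \<in> E" "p \<in> edge_seg e" using cover_grid Bd_grid by blast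
    then show "p \<in> (\<Union>e\<in>K. edge_seg e)" using p unfolding K_def by blast
  qed
  have le2K: "\<forall>e\<in>K. card (edge_seg e \<inter> Bd) \<le> 2" using le2 unfolding K_def by blast
  have c1: "card Bd \<le> 2 * card K" using cover_card[OF fK covB finBd le2K] .
  have c2: "card K + card Io + card Jo \<le> card E" using outer_count[OF Bd_box] unfolding K_def .
  have c3: "2 * (i2 - i1) + 2 * (j2 - j1) \<le> card Bd" using card_Bd[OF lt] .
  have main: "n + m - 2 \<le> card E" using c1 c2 c3 card_Io card_Jo iprops jprops lt by linarith
  moreover have "card E = n + m - 2 \<longrightarrow> ear E (real i1) (real i2) (real j1) (real j2) Bd"
  proof
    assume eqE: "card E = n + m - 2"
    have ck: "2 * card K \<le> card Bd" using c1 c2 c3 card_Io card_Jo iprops jprops lt eqE by linarith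
    have un: "(\<Union>e\<in>K. edge_seg e \<inter> Bd) = Bd" using covB unfolding K_def by blast
    have tl: "(\<forall>e\<in>K. card (edge_seg e \<inter> Bd) = 2) \<and> (\<forall>e1\<in>K. \<forall>e2\<in>K. e1 \<noteq> e2 \<longrightarrow> (edge_seg e1 \<inter> Bd) \<inter> (edge_seg e2 \<inter> Bd) = {})"
      by (rule tight_lemma[OF fK]) (use finBd le2K ck un in auto)
    have two: "\<forall>e\<in>E. \<forall>p\<in>Bd. p \<in> edge_seg e \<longrightarrow> (\<exists>q\<in>Bd. q \<noteq> p \<and> q \<in> edge_seg e)"
    proof (intro ballI impI)
      fix e p assume e: "e \<in> E" "p \<in> Bd" "p \<in> edge_seg e"
      then have "e \<in> K" unfolding K_def by blast
      then have "card (edge_seg e \<inter> Bd) = 2" using tl by blast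
      then obtain x y where xy: "edge_seg e \<inter> Bd = {x, y}" "x \<noteq> y" unfolding card_2_iff by blast
      have "p = x \<or> p = y" using e xy(1) by blast
      then show "\<exists>q\<in>Bd. q \<noteq> p \<and> q \<in> edge_seg e"
      proof
        assume px: "p = x"
        have "y \<in> edge_seg e \<inter> Bd" using xy(1) by blast
        then show ?thesis using px xy(2) by (intro bexI[of _ y]) auto
      next
        assume py: "p = y"
        have "x \<in> edge_seg e \<inter> Bd" using xy(1) by blast
        then show ?thesis using py xy(2) by (intro bexI[of _ x]) auto
      qed
    qed
    have disj: "\<forall>e1\<in>E. \<forall>e2\<in>E. e1 \<noteq> e2 \<longrightarrow> edge_seg e1 \<inter> edge_seg e2 \<inter> Bd = {}"
    proof (intro ballI impI)
      fix e1 e2 assume e: "e1 \<in> E" "e2 \<in> E" "e1 \<noteq> e2"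
      show "edge_seg e1 \<inter> edge_seg e2 \<inter> Bd = {}"
      proof (rule ccontr)
        assume "edge_seg e1 \<inter> edge_seg e2 \<inter> Bd \<noteq> {}"
        then obtain p where p: "p \<in> edge_seg e1" "p \<in> edge_seg e2" "p \<in> Bd" by blast
        then have "e1 \<in> K" "e2 \<in> K" using e unfolding K_def by blast+
        then show False using tl e(3) p by blast
      qed
    qed
    have cor: "(real i1, real j1) \<in> Bd" "(real i1, real j2) \<in> Bd" "(real i2, real j1) \<in> Bd" "(real i2, real j2) \<in> Bd"
      unfolding Bd_mem using iprops jprops by blast+
    have covE: "\<forall>p\<in>Bd. \<exists>e\<in>E. p \<in> edge_seg e" using covB unfolding K_def by blast
    show "ear E (real i1) (real i2) (real j1) (real j2) Bd"
    proof (rule ear.intro[OF box0_inst])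
      show "ear_axioms E (real i1) (real i2) (real j1) (real j2) Bd"
        unfolding ear_axioms_def using finBd Bd_onbd cor lt two disj covE by auto
    qed
  qed
  ultimately show ?thesis by blast
qed

end


context gsetup
begin

lemma two_edges_meet:
  assumes EE: "E = {e1, e2}" and ne: "e1 \<noteq> e2"
  shows "e1 \<inter> e2 \<noteq> {}"
proof
  assume dis: "e1 \<inter> e2 = {}"
  have "e1 \<in> E" "e2 \<in> E" using EE by auto
  then obtain u1 v1 u2 v2 where uv: "u1 \<in> V" "e1 = {u1, v1}" "u2 \<in> V" "e2 = {u2, v2}"
    using edgesV by meson
  have reach: "(u1, u2) \<in> {(x, y). adj E x y}\<^sup>*" using conn uv unfolding graph_connected_def by blast
  have "\<And>y. (u1, y) \<in> {(x, y). adj E x y}\<^sup>* \<Longrightarrow> y \<in> e1"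
  proof -
    fix y assume "(u1, y) \<in> {(x, y). adj E x y}\<^sup>*"
    then show "y \<in> e1"
    proof (induction rule: rtrancl_induct)
      case base then show ?case using uv by simp
    next
      case (step y z)
      then have yz: "{y, z} \<in> E" unfolding adj_def by simp
      have "{y, z} \<noteq> e2" using step.IH dis by blast
      then have "{y, z} = e1" using yz EE by blast
      then show ?case by blast
    qed
  qed
  then have "u2 \<in> e1" using reach by blast
  then show False using dis uv by blast
qed

end

context gfree
begin

lemma gfree_main:
  "n + m - 2 \<le> card E \<and> (card E = n + m - 2 \<longrightarrow> i1 < i2 \<and> j1 < j2 \<and> ear E (real i1) (real i2) (real j1) (real j2) Bd)"
proof (cases "i1 = i2")
  case True
  have d: "n + m - 1 \<le> card E" by (rule degen_col[OF True])
  have "n + m - 2 \<le> card E" "card E \<noteq> n + m - 2" using d n1 m1 by linarith+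
  then show ?thesis by blast
next
  case False
  show ?thesis
  proof (cases "j1 = j2")
    case True
    have d: "n + m - 1 \<le> card E" by (rule degen_row[OF True])
    have "n + m - 2 \<le> card E" "card E \<noteq> n + m - 2" using d n1 m1 by linarith+
    then show ?thesis by blast
  next
    case False
    have "i1 < i2" "j1 < j2" using \<open>i1 \<noteq> i2\<close> False iprops jprops by simp_all
    then show ?thesis using nondeg by blast
  qed
qed

lemma small_case:
  assumes "n \<le> 2" "m \<le> 2"
  shows "n + m - 1 \<le> card E"
proof (rule ccontr)
  assume "\<not> n + m - 1 \<le> card E"
  then have eq: "card E = n + m - 2" using gfree_main by linarith
  then have lt: "i1 < i2" "j1 < j2" and ea: "ear E (real i1) (real i2) (real j1) (real j2) Bd" using gfree_main by blast+
  have v: "i1 = 1" "i2 = 2" "j1 = 1" "j2 = 2" "n = 2" "m = 2" using lt iprops jprops assms by linarith+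
  have c2: "card E = 2" using eq v by simp
  then obtain e1 e2 where EE: "E = {e1, e2}" "e1 \<noteq> e2" unfolding card_2_iff by blast
  have meet: "e1 \<inter> e2 \<noteq> {}" using two_edges_meet[OF EE] .
  have BB: "Bd = {(1, 1), (1, 2), (2, 1), (2, 2)}"
  proof
    show "Bd \<subseteq> {(1, 1), (1, 2), (2, 1), (2, 2)}"
    proof
      fix p assume "p \<in> Bd"
      then obtain i j where ij0: "p = (real i, real j)" "i1 \<le> i" "i \<le> i2" "j1 \<le> j" "j \<le> j2"
        unfolding Bd_mem by blast
      then have ij: "p = (real i, real j)" "1 \<le> i" "i \<le> 2" "1 \<le> j" "j \<le> 2" using v by simp_all
      have "i = 1 \<or> i = 2" "j = 1 \<or> j = 2" using ij by linarith+
      then show "p \<in> {(1, 1), (1, 2), (2, 1), (2, 2)}" using ij(1) by auto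
    qed
  next
    show "{(1, 1), (1, 2), (2, 1), (2, 2)} \<subseteq> Bd"
    proof -
      have "(real i1, real j1) \<in> Bd" "(real i1, real j2) \<in> Bd" "(real i2, real j1) \<in> Bd" "(real i2, real j2) \<in> Bd"
        unfolding Bd_mem using iprops jprops by blast+
      then have "(real 1, real 1) \<in> Bd" "(real 1, real 2) \<in> Bd" "(real 2, real 1) \<in> Bd" "(real 2, real 2) \<in> Bd"
        unfolding v(1-4) .
      then show ?thesis by simp
    qed
  qed
  show False using ear.two_by_two[OF ea _ _ _ _ BB, of e1 e2] v EE meet by simp
qed

lemma nc_case:
  assumes "noncrossing E"
  shows "n + m - 1 \<le> card E"
proof (rule ccontr)
  assume "\<not> n + m - 1 \<le> card E"
  then have eq: "card E = n + m - 2" using gfree_main by linarith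
  then have ea: "ear E (real i1) (real i2) (real j1) (real j2) Bd" using gfree_main by blast
  show False using ear.ear_false[OF ea assms] .
qed

end

theorem lemma8:
  fixes n m :: nat and V :: "point set" and E :: "point set set"
  assumes "n \<ge> 1" and "m \<ge> 1"
    and "geometric_tree V E" and "covers E (grid n m)"
  shows "card E \<ge> 2 * min n m - 2
    \<and> (n \<le> 2 \<and> m \<le> 2 \<longrightarrow> card E \<ge> 2 * min n m - 1)
    \<and> (n \<noteq> m \<longrightarrow> card E \<ge> 2 * min n m - 1)
    \<and> (n = m \<and> n \<ge> 3 \<and> noncrossing E \<longrightarrow> card E \<ge> 2 * n - 1)"
proof -
  interpret gsetup n m V E using assms by unfold_locales
  consider (c) "C = {}" | (r) "R = {}" | (b) "C \<noteq> {}" "R \<noteq> {}" by blast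
  then show ?thesis
  proof cases
    case c
    then have "2 * n - 1 \<le> card E" by (rule nofree_col)
    then show ?thesis by (auto simp: min_def)
  next
    case r
    then have "2 * m - 1 \<le> card E" by (rule nofree_row)
    then show ?thesis by (auto simp: min_def)
  next
    case b
    interpret gfree n m V E using b by unfold_locales
    have h1: "n + m - 2 \<le> card E" using gfree_main by blast
    have h2: "n \<le> 2 \<and> m \<le> 2 \<longrightarrow> n + m - 1 \<le> card E" using small_case by blast
    have h3: "noncrossing E \<longrightarrow> n + m - 1 \<le> card E" using nc_case by blast
    show ?thesis using h1 h2 h3 n1 m1 by (auto simp: min_def)
  qed
qed

end
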